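(* Let $\alpha\in(0,1)\cup(1,\infty)$, let $\rho_{AB}$ be a state on a finite-dimensional $\mathcal{H}_A\otimes\mathcal{H}_B$, and let $U_A$, $V_B$ be unitaries on $\mathcal{H}_A$ and $\mathcal{H}_B$. Then $D^\alpha(\overline{A};B)_{(U_A\otimes V_B)\rho_{AB}(U_A\otimes V_B)^\dagger}=D^\alpha(\overline{A};B)_\rho$.
   Context: All Hilbert spaces are finite-dimensional, $\log$ is natural. For a positive semi-definite $M$ and function $f$, $f(M)$ applies $f$ only to nonzero eigenvalues (negative powers are generalized inverses). For a state $\rho_{ABE}$ and $\alpha\in(0,1)\cup(1,\infty)$, $$I_\alpha(A;B|E)_\rho=\frac{\alpha}{\alpha-1}\log\mathrm{Tr}\Big\{\Big(\rho_E^{(\alpha-1)/2}\,\mathrm{Tr}_A\big\{\rho_{AE}^{(1-\alpha)/2}\rho_{ABE}^{\alpha}\rho_{AE}^{(1-\alpha)/2}\big\}\,\rho_E^{(\alpha-1)/2}\Big)^{1/\alpha}\Big\}.$$ The Rényi quantum discord of $\rho_{AB}$ is $D^\alpha(\overline{A};B)_\rho=\inf_{\{\Lambda_x\}}I_\alpha(E;B|X)_\omega$, the infimum over POVMs $\{\Lambda_x\}$ on $\mathcal{H}_A$, where $\omega_{EXB}=U_{A\to EX}\rho_{AB}U_{A\to EX}^\dagger$ and $U_{A\to EX}$ is an isometric extension of the measurement channel $\sigma\mapsto\sum_x\mathrm{Tr}\{\Lambda_x\sigma\}|x\rangle\langle x|_X$ (the same formula is used for every $\alpha\neq1$). *)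

theory Defs
  imports "Jordan_Normal_Form.Schur_Decomposition" "HOL-Library.Extended_Real"
begin

text \<open>A composite system C^m (x) C^n is
C^(m*n) with the index of basis vector |i>|j> being i*n+j (Kronecker convention).\<close>

definition mtrace :: "complex mat \<Rightarrow> complex" where
  "mtrace M = (\<Sum>i<dim_row M. M $$ (i, i))"

definition kron :: "complex mat \<Rightarrow> complex mat \<Rightarrow> complex mat" where
  "kron A B = mat (dim_row A * dim_row B) (dim_col A * dim_col B)
     (\<lambda>(i, j). A $$ (i div dim_row B, j div dim_col B) * B $$ (i mod dim_row B, j mod dim_col B))"

text \<open>Swap operator C^m (x) C^n -> C^n (x) C^m, |i>|j> |-> |j>|i>.\<close>
definition swap_mat :: "nat \<Rightarrow> nat \<Rightarrow> complex mat" where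
  "swap_mat m n = mat (m * n) (m * n)
     (\<lambda>(r, c). if r = (c mod n) * m + c div n then 1 else 0)"

definition ptrace_left :: "nat \<Rightarrow> nat \<Rightarrow> complex mat \<Rightarrow> complex mat" where
  "ptrace_left m n M = mat n n (\<lambda>(i, j). \<Sum>a<m. M $$ (a * n + i, a * n + j))"

definition ptrace_mid :: "nat \<Rightarrow> nat \<Rightarrow> nat \<Rightarrow> complex mat \<Rightarrow> complex mat" where
  "ptrace_mid a b e M = mat (a * e) (a * e)
     (\<lambda>(i, j). \<Sum>k<b. M $$ (((i div e) * b + k) * e + i mod e, ((j div e) * b + k) * e + j mod e))"

text \<open>X_{AE} (x) 1_B, as an operator on C^a (x) C^b (x) C^e.\<close>
definition embed_mid :: "nat \<Rightarrow> nat \<Rightarrow> nat \<Rightarrow> complex mat \<Rightarrow> complex mat" where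
  "embed_mid a b e X = mat (a * b * e) (a * b * e)
     (\<lambda>(i, j). if (i div e) mod b = (j div e) mod b
               then X $$ ((i div e) div b * e + i mod e, (j div e) div b * e + j mod e) else 0)"

definition hermitian :: "complex mat \<Rightarrow> bool" where
  "hermitian M \<longleftrightarrow> square_mat M \<and> mat_adjoint M = M"

definition psd :: "complex mat \<Rightarrow> bool" where
  "psd M \<longleftrightarrow> hermitian M \<and>
     (\<forall>v \<in> carrier_vec (dim_row M). 0 \<le> Re (conjugate v \<bullet> (M *\<^sub>v v)))"

definition unitary :: "nat \<Rightarrow> complex mat \<Rightarrow> bool" where
  "unitary n U \<longleftrightarrow> U \<in> carrier_mat n n \<and> mat_adjoint U * U = 1\<^sub>m n \<and> U * mat_adjoint U = 1\<^sub>m n"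

definition density :: "nat \<Rightarrow> complex mat \<Rightarrow> bool" where
  "density n \<rho> \<longleftrightarrow> \<rho> \<in> carrier_mat n n \<and> psd \<rho> \<and> mtrace \<rho> = 1"

definition diag_of :: "nat \<Rightarrow> (nat \<Rightarrow> real) \<Rightarrow> complex mat" where
  "diag_of n d = mat n n (\<lambda>(i, j). if i = j then complex_of_real (d i) else 0)"

text \<open>Functional calculus f(M) for Hermitian M, where f is applied only to
the nonzero eigenvalues (zero eigenvalues are mapped to 0). Defined through a
spectral decomposition M = W diag(d) W^dagger; the result does not depend on the
chosen decomposition.\<close>
definition mfun :: "(real \<Rightarrow> real) \<Rightarrow> complex mat \<Rightarrow> complex mat" where
  "mfun f M = (SOME N. \<exists>W d. unitary (dim_row M) W \<and>
       M = W * diag_of (dim_row M) d * mat_adjoint W \<and>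
       N = W * diag_of (dim_row M) (\<lambda>i. if d i = 0 then 0 else f (d i)) * mat_adjoint W)"

definition mpow :: "complex mat \<Rightarrow> real \<Rightarrow> complex mat" where
  "mpow M p = mfun (\<lambda>t. t powr p) M"

text \<open>Renyi conditional mutual information I_alpha(A;B|E)_rho for rho on
C^a (x) C^b (x) C^e (ordering A, B, E).\<close>
definition renyi_cmi :: "real \<Rightarrow> nat \<Rightarrow> nat \<Rightarrow> nat \<Rightarrow> complex mat \<Rightarrow> real" where
  "renyi_cmi \<alpha> a b e \<rho> =
    (let \<rho>AE = ptrace_mid a b e \<rho>;
         \<rho>E = ptrace_left (a * b) e \<rho>;
         S = embed_mid a b e (mpow \<rho>AE ((1 - \<alpha>) / 2));
         inner = ptrace_left a (b * e) (S * mpow \<rho> \<alpha> * S);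
         T = kron (1\<^sub>m b) (mpow \<rho>E ((\<alpha> - 1) / 2));
         outer = T * inner * T
     in \<alpha> / (\<alpha> - 1) * ln (Re (mtrace (mpow outer (1 / \<alpha>)))))"

definition povm :: "nat \<Rightarrow> nat \<Rightarrow> (nat \<Rightarrow> complex mat) \<Rightarrow> bool" where
  "povm d n \<Lambda> \<longleftrightarrow> (\<forall>x<n. \<Lambda> x \<in> carrier_mat d d \<and> psd (\<Lambda> x)) \<and>
     mat d d (\<lambda>(i, j). \<Sum>x<n. \<Lambda> x $$ (i, j)) = 1\<^sub>m d"

definition meas_channel :: "nat \<Rightarrow> (nat \<Rightarrow> complex mat) \<Rightarrow> complex mat \<Rightarrow> complex mat" where
  "meas_channel n \<Lambda> \<sigma> = mat n n (\<lambda>(i, j). if i = j then mtrace (\<Lambda> i * \<sigma>) else 0)"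

text \<open>V : C^d -> C^dE (x) C^n (ordering E, X) is an isometric extension of the
measurement channel.\<close>
definition iso_ext :: "nat \<Rightarrow> nat \<Rightarrow> (nat \<Rightarrow> complex mat) \<Rightarrow> nat \<Rightarrow> complex mat \<Rightarrow> bool" where
  "iso_ext d n \<Lambda> dE V \<longleftrightarrow> V \<in> carrier_mat (dE * n) d \<and> mat_adjoint V * V = 1\<^sub>m d \<and>
     (\<forall>\<sigma> \<in> carrier_mat d d. ptrace_left dE n (V * \<sigma> * mat_adjoint V) = meas_channel n \<Lambda> \<sigma>)"

text \<open>For rho_AB on C^dA (x) C^dB and isometry V_{A->EX}: the state omega
reordered as E (x) B (x) X, and I_alpha(E;B|X)_omega.\<close>
definition discord_obj :: "real \<Rightarrow> nat \<Rightarrow> nat \<Rightarrow> complex mat \<Rightarrow> nat \<Rightarrow> nat \<Rightarrow> complex mat \<Rightarrow> real" where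
  "discord_obj \<alpha> dA dB \<rho> n dE V =
    (let \<omega>EXB = kron V (1\<^sub>m dB) * \<rho> * mat_adjoint (kron V (1\<^sub>m dB));
         P = kron (1\<^sub>m dE) (swap_mat n dB);
         \<omega>EBX = P * \<omega>EXB * mat_adjoint P
     in renyi_cmi \<alpha> dE dB n \<omega>EBX)"

definition renyi_discord :: "real \<Rightarrow> nat \<Rightarrow> nat \<Rightarrow> complex mat \<Rightarrow> ereal" where
  "renyi_discord \<alpha> dA dB \<rho> =
    (INF q \<in> {(n, \<Lambda>, dE, V). povm dA n \<Lambda> \<and> iso_ext dA n \<Lambda> dE V}.
        ereal (case q of (n, \<Lambda>, dE, V) \<Rightarrow> discord_obj \<alpha> dA dB \<rho> n dE V))"

end

theory Submission
  imports Defs "Jordan_Normal_Form.Spectral_Radius"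
begin


lemma mult_entry:
  assumes "i < dim_row A" "j < dim_col B" "dim_col A = dim_row B"
  shows "(A * B) $$ (i,j) = (\<Sum>l<dim_col A. A $$ (i,l) * B $$ (l,j))"
  using assms by (auto simp: scalar_prod_def atLeast0LessThan intro!: sum.cong)

declare index_mult_mat(1)[simp del]
declare mult_entry[simp]

lemma adj_eq: "mat_adjoint (A::complex mat) = mat (dim_col A) (dim_row A) (\<lambda>(i,j). cnj (A $$ (j,i)))"
  by (rule eq_matI, auto simp: mat_adjoint_def mat_of_rows_def)

lemma adj_dims[simp]: "dim_row (mat_adjoint (A::complex mat)) = dim_col A" "dim_col (mat_adjoint (A::complex mat)) = dim_row A"
  by (auto simp: adj_eq)

lemma adj_index[simp]: "i < dim_col A \<Longrightarrow> j < dim_row A \<Longrightarrow> mat_adjoint (A::complex mat) $$ (i,j) = cnj (A $$ (j,i))"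
  by (simp add: adj_eq)

lemma adj_carrier[simp]: "(A::complex mat) \<in> carrier_mat n m \<Longrightarrow> mat_adjoint A \<in> carrier_mat m n"
  by auto

lemma adj_adj[simp]: "mat_adjoint (mat_adjoint A) = (A::complex mat)"
  by (rule eq_matI, auto)

lemma adj_mult:
  fixes A B :: "complex mat"
  assumes "dim_col A = dim_row B"
  shows "mat_adjoint (A * B) = mat_adjoint B * mat_adjoint A"
proof (rule eq_matI)
  fix i j assume i: "i < dim_row (mat_adjoint B * mat_adjoint A)" and j: "j < dim_col (mat_adjoint B * mat_adjoint A)"
  hence i': "i < dim_col B" and j': "j < dim_row A" by auto
  have "mat_adjoint (A * B) $$ (i,j) = cnj ((A*B) $$ (j,i))" using i' j' by simp
  also have "\<dots> = (\<Sum>l<dim_col A. cnj (A $$ (j,l)) * cnj (B $$ (l,i)))"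
    using i' j' assms by (simp add: cnj_sum)
  also have "\<dots> = (mat_adjoint B * mat_adjoint A) $$ (i,j)"
    using i' j' assms by (subst mult_entry, auto intro!: sum.cong simp: mult.commute)
  finally show "mat_adjoint (A * B) $$ (i,j) = (mat_adjoint B * mat_adjoint A) $$ (i,j)" .
qed auto

lemma adj_one[simp]: "mat_adjoint (1\<^sub>m n) = (1\<^sub>m n :: complex mat)"
  by (rule eq_matI, auto)

lemma sum_split: "(\<Sum>l<(a::nat)*b. g l) = (\<Sum>i<a. \<Sum>j<b. g (i*b+j))"
proof (induction a)
  case 0 then show ?case by simp
next
  case (Suc a)
  have e: "{..<Suc a * b} = {..<a*b} \<union> {a*b..<a*b+b}" by auto
  have "(\<Sum>l<Suc a*b. g l) = (\<Sum>l<a*b. g l) + (\<Sum>l\<in>{a*b..<a*b+b}. g l)"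
    unfolding e by (subst sum.union_disjoint) auto
  also have "(\<Sum>l\<in>{a*b..<a*b+b}. g l) = (\<Sum>j<b. g (a*b+j))"
  proof -
    have "(\<Sum>l\<in>{a*b..<a*b+b}. g l) = (\<Sum>j\<in>{0..<b}. g (j + a*b))"
      using sum.shift_bounds_nat_ivl[of g 0 "a*b" b] by (simp add: add.commute)
    then show ?thesis by (simp add: atLeast0LessThan add.commute)
  qed
  finally show ?case using Suc by simp
qed

lemma idx_div[simp]: "j < (b::nat) \<Longrightarrow> (i*b+j) div b = i" by simp
lemma idx_mod[simp]: "j < (b::nat) \<Longrightarrow> (i*b+j) mod b = j" by simp
lemma idx_div'[simp]: "j < (b::nat) \<Longrightarrow> (b*i+j) div b = i" by simp
lemma idx_lt: "i < (a::nat) \<Longrightarrow> j < b \<Longrightarrow> i*b+j < a*b"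
proof -
  assume "i < a" "j < b"
  hence "i*b+j < i*b + b" by simp
  also have "\<dots> = (Suc i) * b" by simp
  also have "\<dots> \<le> a * b" using \<open>i<a\<close> by (intro mult_right_mono) auto
  finally show ?thesis .
qed

lemma mtrace_comm:
  assumes "A \<in> carrier_mat a b" "B \<in> carrier_mat b a"
  shows "mtrace (A * B) = mtrace (B * A)"
proof -
  have "mtrace (A*B) = (\<Sum>i<a. \<Sum>l<b. A $$ (i,l) * B $$ (l,i))"
    using assms by (auto simp: mtrace_def mult_entry)
  also have "\<dots> = (\<Sum>l<b. \<Sum>i<a. B $$ (l,i) * A $$ (i,l))"
    by (subst sum.swap, simp add: mult.commute)
  also have "\<dots> = mtrace (B*A)"
    using assms by (auto simp: mtrace_def mult_entry)
  finally show ?thesis .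
qed

lemma kron_dims[simp]: "dim_row (kron A B) = dim_row A * dim_row B" "dim_col (kron A B) = dim_col A * dim_col B"
  by (auto simp: kron_def)

lemma kron_carrier[simp]: "A \<in> carrier_mat a b \<Longrightarrow> B \<in> carrier_mat c d \<Longrightarrow> kron A B \<in> carrier_mat (a*c) (b*d)"
  by auto

lemma kron_index:
  "i < dim_row A * dim_row B \<Longrightarrow> j < dim_col A * dim_col B \<Longrightarrow>
   kron A B $$ (i,j) = A $$ (i div dim_row B, j div dim_col B) * B $$ (i mod dim_row B, j mod dim_col B)"
  by (simp add: kron_def)

lemma kron_index2:
  assumes "i < dim_row A" "k < dim_row B" "j < dim_col A" "l < dim_col B"
  shows "kron A B $$ (i * dim_row B + k, j * dim_col B + l) = A $$ (i,j) * B $$ (k,l)"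
proof -
  have "i * dim_row B + k < dim_row A * dim_row B" "j * dim_col B + l < dim_col A * dim_col B"
    using assms by (auto intro: idx_lt)
  then show ?thesis using assms by (simp add: kron_index)
qed

lemma kron_mult:
  assumes A: "A \<in> carrier_mat a b" and B: "B \<in> carrier_mat c d"
    and C: "C \<in> carrier_mat b p" and D: "D \<in> carrier_mat d q"
  shows "kron A B * kron C D = kron (A*C) (B*D)"
proof (rule eq_matI)
  fix i j assume "i < dim_row (kron (A*C) (B*D))" "j < dim_col (kron (A*C) (B*D))"
  hence i: "i < a*c" and j: "j < p*q" using A B C D by auto
  have c0: "c > 0" and q0: "q > 0" using i j by (auto intro: gr0I)
  have i1: "i div c < a" "i mod c < c" using i c0 by (auto simp: less_mult_imp_div_less)
  have j1: "j div q < p" "j mod q < q" using j q0 by (auto simp: less_mult_imp_div_less)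
  have "(kron A B * kron C D) $$ (i,j) = (\<Sum>l<b*d. kron A B $$ (i,l) * kron C D $$ (l,j))"
    using A B C D i j by (subst mult_entry, auto)
  also have "\<dots> = (\<Sum>x<b. \<Sum>y<d. kron A B $$ (i,x*d+y) * kron C D $$ (x*d+y,j))"
    by (rule sum_split)
  also have "\<dots> = (\<Sum>x<b. \<Sum>y<d. (A $$ (i div c, x) * C $$ (x, j div q)) * (B $$ (i mod c, y) * D $$ (y, j mod q)))"
    using A B C D i j idx_lt by (auto intro!: sum.cong simp: kron_index)
  also have "\<dots> = (\<Sum>x<b. A $$ (i div c, x) * C $$ (x, j div q)) * (\<Sum>y<d. B $$ (i mod c, y) * D $$ (y, j mod q))"
    by (simp add: sum_product)
  also have "\<dots> = (A*C) $$ (i div c, j div q) * (B*D) $$ (i mod c, j mod q)"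
    using A B C D i1 j1 by (simp add: mult_entry)
  also have "\<dots> = kron (A*C) (B*D) $$ (i,j)"
    using A B C D i j by (simp add: kron_index)
  finally show "(kron A B * kron C D) $$ (i,j) = kron (A*C) (B*D) $$ (i,j)" .
qed (insert assms, auto)

lemma kron_one: "kron (1\<^sub>m a) (1\<^sub>m b) = 1\<^sub>m (a*b)"
proof (rule eq_matI)
  fix i j assume "i < dim_row (1\<^sub>m (a*b))" "j < dim_col (1\<^sub>m (a * b))"
  hence i: "i < a*b" and j: "j < a*b" by auto
  have b0: "b > 0" using i by (auto intro: gr0I)
  have "(i div b = j div b \<and> i mod b = j mod b) = (i = j)"
    by (metis div_mult_mod_eq)
  moreover have "i div b < a" "j div b < a" using i j b0 by (auto simp: less_mult_imp_div_less)
  ultimately show "kron (1\<^sub>m a) (1\<^sub>m b) $$ (i,j) = 1\<^sub>m (a*b) $$ (i,j)"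
    using i j b0 by (simp add: kron_index, blast)
qed auto

lemma adj_kron: "mat_adjoint (kron A B) = kron (mat_adjoint A) (mat_adjoint B)"
proof (rule eq_matI)
  fix i j assume "i < dim_row (kron (mat_adjoint A) (mat_adjoint B))" "j < dim_col (kron (mat_adjoint A) (mat_adjoint B))"
  hence i: "i < dim_col A * dim_col B" and j: "j < dim_row A * dim_row B" by auto
  have b0: "dim_col B > 0" "dim_row B > 0" using i j by (auto intro: gr0I)
  have "i div dim_col B < dim_col A" "j div dim_row B < dim_row A"
    using i j b0 by (auto simp: less_mult_imp_div_less)
  then show "mat_adjoint (kron A B) $$ (i,j) = kron (mat_adjoint A) (mat_adjoint B) $$ (i,j)"
    using i j b0 by (simp add: kron_index)
qed auto

lemma kron_assoc:
  "kron (kron A B) C = kron A (kron B C)"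
proof (rule eq_matI)
  fix i j assume "i < dim_row (kron A (kron B C))" "j < dim_col (kron A (kron B C))"
  hence i: "i < dim_row A * (dim_row B * dim_row C)" and j: "j < dim_col A * (dim_col B * dim_col C)" by auto
  define r where "r = dim_row B" define c where "c = dim_col B"
  define r' where "r' = dim_row C" define c' where "c' = dim_col C"
  have pos: "r > 0" "r' > 0" "c > 0" "c' > 0" using i j unfolding r_def r'_def c_def c'_def by (auto intro: gr0I)
  have e1: "i div r' div r = i div (r * r')" "j div c' div c = j div (c*c')"
    by (simp_all add: div_mult2_eq mult.commute[of r r'] mult.commute[of c c'])
  have e2: "i div r' mod r = i mod (r*r') div r'" "j div c' mod c = j mod (c*c') div c'"
    using pos by (simp_all add: mod_mult2_eq mult.commute[of r r'] mult.commute[of c c'])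
  have e3: "i mod (r*r') mod r' = i mod r'" "j mod (c*c') mod c' = j mod c'"
    by (simp_all add: mod_mult2_eq mult.commute[of r r'] mult.commute[of c c'])
  have b1: "i div r' < dim_row A * r" "j div c' < dim_col A * c"
    using i j pos unfolding r_def r'_def c_def c'_def
    by (simp_all add: less_mult_imp_div_less mult.assoc)
  have b2: "i mod (r*r') < r * r'" "j mod (c*c') < c*c'" using pos by simp_all
  have L: "kron (kron A B) C $$ (i,j) = A $$ (i div r' div r, j div c' div c) * B $$ (i div r' mod r, j div c' mod c) * C $$ (i mod r', j mod c')"
    using i j b1 unfolding r_def r'_def c_def c'_def
    by (simp add: kron_index mult.assoc[symmetric])
  have R: "kron A (kron B C) $$ (i,j) = A $$ (i div (r*r'), j div (c*c')) * (B $$ (i mod (r*r') div r', j mod (c*c') div c') * C $$ (i mod (r*r') mod r', j mod (c*c') mod c'))"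
    using i j b2 unfolding r_def r'_def c_def c'_def
    by (simp add: kron_index)
  show "kron (kron A B) C $$ (i,j) = kron A (kron B C) $$ (i,j)"
    unfolding L R e1 e2 e3 by (simp add: mult.assoc)
qed (auto simp: mult.assoc)



lemma unitaryD: "unitary n U \<Longrightarrow> U \<in> carrier_mat n n"
  "unitary n U \<Longrightarrow> mat_adjoint U * U = 1\<^sub>m n" "unitary n U \<Longrightarrow> U * mat_adjoint U = 1\<^sub>m n"
  by (auto simp: unitary_def)

lemma unitary_left:
  assumes "U \<in> carrier_mat n n" "mat_adjoint U * U = 1\<^sub>m n"
  shows "unitary n U"
  using assms mat_mult_left_right_inverse[of "mat_adjoint U" n U] by (auto simp: unitary_def)

lemma unitary_adj: "unitary n U \<Longrightarrow> unitary n (mat_adjoint U)"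
  by (auto simp: unitary_def)

lemma unitary_one: "unitary n (1\<^sub>m n)"
  by (auto simp: unitary_def)

lemma unitary_mult:
  assumes U: "unitary n U" and W: "unitary n W"
  shows "unitary n (U * W)"
proof (rule unitary_left)
  have Uc: "U \<in> carrier_mat n n" and Wc: "W \<in> carrier_mat n n" using U W by (auto simp: unitary_def)
  show "U * W \<in> carrier_mat n n" using Uc Wc by auto
  have a: "mat_adjoint U \<in> carrier_mat n n" "mat_adjoint W \<in> carrier_mat n n" using Uc Wc by auto
  have "mat_adjoint (U * W) * (U * W) = (mat_adjoint W * mat_adjoint U) * (U * W)"
    using Uc Wc by (simp add: adj_mult)
  also have "\<dots> = mat_adjoint W * (mat_adjoint U * (U * W))"
    using a Uc Wc by (meson assoc_mult_mat mult_carrier_mat)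
  also have "\<dots> = mat_adjoint W * ((mat_adjoint U * U) * W)"
    using a Uc Wc by (subst assoc_mult_mat[of _ n n _ n _ n]) auto
  also have "\<dots> = 1\<^sub>m n" using U W Wc by (simp add: unitary_def)
  finally show "mat_adjoint (U * W) * (U * W) = 1\<^sub>m n" .
qed

lemma unitary_kron:
  assumes U: "unitary a U" and V: "unitary b V"
  shows "unitary (a*b) (kron U V)"
proof (rule unitary_left)
  have Uc: "U \<in> carrier_mat a a" and Vc: "V \<in> carrier_mat b b" using U V by (auto simp: unitary_def)
  show "kron U V \<in> carrier_mat (a*b) (a*b)" using Uc Vc by auto
  have "mat_adjoint (kron U V) * kron U V = kron (mat_adjoint U * U) (mat_adjoint V * V)"
    using Uc Vc by (simp add: adj_kron kron_mult[of _ a a _ b b _ a _ b])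
  also have "\<dots> = 1\<^sub>m (a*b)" using U V by (simp add: unitary_def kron_one)
  finally show "mat_adjoint (kron U V) * kron U V = 1\<^sub>m (a*b)" .
qed

lemma diag_of_carrier[simp]: "diag_of n d \<in> carrier_mat n n"
  by (simp add: diag_of_def)

lemma diag_of_dims[simp]: "dim_row (diag_of n d) = n" "dim_col (diag_of n d) = n"
  by (simp_all add: diag_of_def)

lemma diag_entry:
  assumes W: "W \<in> carrier_mat n n" and i: "i < n" and j: "j < n"
  shows "(W * diag_of n d * mat_adjoint W) $$ (i,j) = (\<Sum>k<n. W $$ (i,k) * complex_of_real (d k) * cnj (W $$ (j,k)))"
proof -
  have "\<And>k. k < n \<Longrightarrow> (W * diag_of n d) $$ (i,k) = W $$ (i,k) * complex_of_real (d k)"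
  proof -
    fix k assume k: "k < n"
    have "(W * diag_of n d) $$ (i,k) = (\<Sum>l<n. W $$ (i,l) * (if l = k then complex_of_real (d l) else 0))"
      using W i k by (auto simp: diag_of_def intro!: sum.cong)
    also have "\<dots> = W $$ (i,k) * complex_of_real (d k)"
      using k by (simp add: if_distrib sum.delta cong: if_cong)
    finally show "(W * diag_of n d) $$ (i,k) = W $$ (i,k) * complex_of_real (d k)" .
  qed
  then show ?thesis using W i j by (auto intro!: sum.cong)
qed

lemma hermitianD: "hermitian M \<Longrightarrow> mat_adjoint M = M" by (simp add: hermitian_def)

lemma hermitian_entry:
  assumes "hermitian M" "i < dim_row M" "j < dim_row M"
  shows "M $$ (i,j) = cnj (M $$ (j,i))"
proof -
  have sq: "dim_col M = dim_row M" using assms(1) by (auto simp: hermitian_def square_mat.simps)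
  have "M $$ (i,j) = mat_adjoint M $$ (i,j)" using assms(1) by (simp add: hermitian_def)
  also have "\<dots> = cnj (M $$ (j,i))" using assms sq by simp
  finally show ?thesis .
qed

lemma hermitian_conj:
  fixes M W :: "complex mat"
  assumes M: "M \<in> carrier_mat n n" and H: "mat_adjoint M = M" and W: "W \<in> carrier_mat m n"
  shows "mat_adjoint (W * M * mat_adjoint W) = W * M * mat_adjoint W"
proof -
  have a: "mat_adjoint W \<in> carrier_mat n m" using W by auto
  have "mat_adjoint (W * M * mat_adjoint W) = W * (M * mat_adjoint W)"
    using M W H a by (simp add: adj_mult)
  also have "\<dots> = W * M * mat_adjoint W" using M W a by (subst assoc_mult_mat[of _ m n _ n _ m]) auto
  finally show ?thesis .
qed



lemma cscalar_self:
  fixes w :: "complex vec"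
  assumes "w \<in> carrier_vec n"
  shows "w \<bullet>c w = complex_of_real (\<Sum>k<n. (cmod (w $ k))^2)"
proof -
  have e: "\<And>k. w$k * cnj (w$k) = complex_of_real ((cmod (w$k))^2)"
    by (metis complex_norm_square of_real_power)
  have "w \<bullet>c w = (\<Sum>k<n. w$k * cnj (w$k))"
    using assms by (auto simp: scalar_prod_def atLeast0LessThan intro!: sum.cong)
  also have "\<dots> = complex_of_real (\<Sum>k<n. (cmod (w $ k))^2)"
    unfolding e of_real_sum ..
  finally show ?thesis .
qed

lemma unit_basis_exists:
  fixes v :: "complex vec"
  assumes v: "v \<in> carrier_vec n" and v0: "v \<noteq> 0\<^sub>v n"
  shows "\<exists>W c. unitary n W \<and> (\<forall>k<n. W $$ (k,0) = c * v $ k)"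
proof -
  interpret cof_vec_space n "TYPE(complex)" .
  define b where "b = basis_completion v"
  from basis_completion[OF v v0, folded b_def]
  have span_b: "span (set b) = carrier_vec n" and dist_b: "distinct b" 
    and indep: "\<not> lin_dep (set b)" and b: "set b \<subseteq> carrier_vec n" and hdb: "hd b = v" 
    and len_b: "length b = n" by auto
  have n: "n \<noteq> 0" using v v0 by (auto intro!: eq_vecI)
  from hdb len_b n obtain vs where bv: "b = v # vs" by (cases b, auto)
  define ws where "ws = gram_schmidt n b"
  from gram_schmidt_result[OF b dist_b indep refl, folded ws_def]
  have ws: "set ws \<subseteq> carrier_vec n" "corthogonal ws" "length ws = n" 
    by (auto simp: len_b)
  from gram_schmidt_hd[OF v, of vs, folded bv] have hdws: "hd ws = v" unfolding ws_def .
  have ws0: "ws ! 0 = v" using hdws ws(3) n by (cases ws, auto)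
  define s where "s i = sqrt (\<Sum>k<n. (cmod (ws ! i $ k))^2)" for i
  have wsc: "\<And>i. i < n \<Longrightarrow> ws ! i \<in> carrier_vec n" using ws by auto
  have sq: "\<And>i. i < n \<Longrightarrow> ws ! i \<bullet>c ws ! i = complex_of_real ((s i)^2)"
  proof -
    fix i assume i: "i < n"
    have "(s i)^2 = (\<Sum>k<n. (cmod (ws ! i $ k))^2)" unfolding s_def
      by (rule real_sqrt_pow2, rule sum_nonneg, simp)
    then show "ws ! i \<bullet>c ws ! i = complex_of_real ((s i)^2)"
      using cscalar_self[OF wsc[OF i]] by simp
  qed
  have nz: "\<And>i. i < n \<Longrightarrow> ws ! i \<bullet>c ws ! i \<noteq> 0"
    using ws(2,3) unfolding corthogonal_def by auto
  have spos: "\<And>i. i < n \<Longrightarrow> s i > 0"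
  proof -
    fix i assume i: "i < n"
    have "s i \<ge> 0" unfolding s_def by (simp add: sum_nonneg)
    moreover have "s i \<noteq> 0" using sq[OF i] nz[OF i] by auto
    ultimately show "s i > 0" by simp
  qed
  define W where "W = mat n n (\<lambda>(k,i). ws ! i $ k / complex_of_real (s i))"
  have Wc: "W \<in> carrier_mat n n" unfolding W_def by simp
  have "mat_adjoint W * W = 1\<^sub>m n"
  proof (rule eq_matI)
    fix i j assume "i < dim_row (1\<^sub>m n)" "j < dim_col (1\<^sub>m n)"
    hence i: "i < n" and j: "j < n" by auto
    have "(mat_adjoint W * W) $$ (i,j) = (\<Sum>k<n. cnj (ws ! i $ k) * ws ! j $ k) / (complex_of_real (s i) * complex_of_real (s j))"
      using i j Wc by (simp add: W_def sum_divide_distrib)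
    also have "(\<Sum>k<n. cnj (ws ! i $ k) * ws ! j $ k) = ws ! j \<bullet>c ws ! i"
      using wsc[OF i] wsc[OF j] by (auto simp: scalar_prod_def atLeast0LessThan mult.commute intro!: sum.cong)
    finally have e: "(mat_adjoint W * W) $$ (i,j) = ws ! j \<bullet>c ws ! i / (complex_of_real (s i) * complex_of_real (s j))" .
    show "(mat_adjoint W * W) $$ (i,j) = 1\<^sub>m n $$ (i,j)"
    proof (cases "i = j")
      case True
      then show ?thesis using e sq[OF i] spos[OF i] i by (simp add: power2_eq_square)
    next
      case False
      then have "ws ! j \<bullet>c ws ! i = 0" using ws(2,3) i j unfolding corthogonal_def by auto
      then show ?thesis using e False i j by simp
    qed
  qed (insert Wc, auto)
  hence "unitary n W" using Wc by (rule unitary_left[rotated])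
  moreover have "\<forall>k<n. W $$ (k,0) = (1 / complex_of_real (s 0)) * v $ k"
    using n ws0 unfolding W_def by auto
  ultimately show ?thesis by blast
qed

definition ext1 :: "nat \<Rightarrow> complex mat \<Rightarrow> complex mat" where
  "ext1 m W3 = mat (Suc m) (Suc m) (\<lambda>(i,j). if i = 0 then (if j = 0 then 1 else 0) else if j = 0 then 0 else W3 $$ (i-1, j-1))"

lemma ext1_carrier: "ext1 m W3 \<in> carrier_mat (Suc m) (Suc m)" by (simp add: ext1_def)
lemma ext1_00: "ext1 m W3 $$ (0,0) = 1" by (simp add: ext1_def)
lemma ext1_0S: "j < m \<Longrightarrow> ext1 m W3 $$ (0,Suc j) = 0" by (simp add: ext1_def)
lemma ext1_S0: "i < m \<Longrightarrow> ext1 m W3 $$ (Suc i,0) = 0" by (simp add: ext1_def)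
lemma ext1_SS: "i < m \<Longrightarrow> j < m \<Longrightarrow> ext1 m W3 $$ (Suc i,Suc j) = W3 $$ (i,j)" by (simp add: ext1_def)

lemma sum_Suc_split: "(\<Sum>k<Suc m. f k) = f 0 + (\<Sum>k<m. f (Suc k))"
  by (fact sum.lessThan_Suc_shift)

lemma ext1_unitary:
  assumes W3: "unitary m W3"
  shows "unitary (Suc m) (ext1 m W3)"
proof (rule unitary_left[OF ext1_carrier])
  have W3c: "W3 \<in> carrier_mat m m" and W3u: "mat_adjoint W3 * W3 = 1\<^sub>m m" using W3 by (auto simp: unitary_def)
  let ?W = "ext1 m W3"
  have T: "(mat_adjoint ?W * ?W) $$ (i,j) = cnj (?W $$ (0,i)) * ?W $$ (0,j) + (\<Sum>k<m. cnj (?W $$ (Suc k,i)) * ?W $$ (Suc k,j))"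
    if i: "i < Suc m" and j: "j < Suc m" for i j
  proof -
    have "(mat_adjoint ?W * ?W) $$ (i,j) = (\<Sum>k<Suc m. mat_adjoint ?W $$ (i,k) * ?W $$ (k,j))"
      using mult_entry[of i "mat_adjoint ?W" j ?W] ext1_carrier[of m W3] i j by (simp del: mult_entry)
    also have "\<dots> = (\<Sum>k<Suc m. cnj (?W $$ (k,i)) * ?W $$ (k,j))"
      using ext1_carrier[of m W3] i j by (intro sum.cong) auto
    finally show ?thesis by (simp only: sum_Suc_split)
  qed
  show "mat_adjoint ?W * ?W = 1\<^sub>m (Suc m)"
  proof (rule eq_matI)
    fix i j assume "i < dim_row (1\<^sub>m (Suc m))" "j < dim_col (1\<^sub>m (Suc m))"
    hence i: "i < Suc m" and j: "j < Suc m" by auto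
    show "(mat_adjoint ?W * ?W) $$ (i,j) = 1\<^sub>m (Suc m) $$ (i,j)"
    proof (cases i)
      case 0
      have s: "(\<Sum>k<m. cnj (?W $$ (Suc k,i)) * ?W $$ (Suc k,j)) = 0"
        using 0 by (intro sum.neutral) (simp add: ext1_S0)
      show ?thesis
      proof (cases j)
        case 0 then show ?thesis using T[OF i j] s \<open>i = 0\<close> by (simp add: ext1_00)
      next
        case (Suc j') then show ?thesis using T[OF i j] s \<open>i = 0\<close> j by (simp add: ext1_00 ext1_0S)
      qed
    next
      case (Suc i')
      show ?thesis
      proof (cases j)
        case 0
        have s: "(\<Sum>k<m. cnj (?W $$ (Suc k,i)) * ?W $$ (Suc k,j)) = 0"
          using 0 by (intro sum.neutral) (simp add: ext1_S0)
        show ?thesis using T[OF i j] s \<open>i = Suc i'\<close> 0 i by (simp add: ext1_0S)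
      next
        case (Suc j')
        have "(\<Sum>k<m. cnj (?W $$ (Suc k,i)) * ?W $$ (Suc k,j)) = (\<Sum>k<m. cnj (W3 $$ (k,i')) * W3 $$ (k,j'))"
          using \<open>i = Suc i'\<close> Suc i j by (intro sum.cong) (simp_all add: ext1_SS)
        also have "\<dots> = (mat_adjoint W3 * W3) $$ (i',j')"
          using W3c \<open>i = Suc i'\<close> Suc i j by simp
        finally show ?thesis using T[OF i j] \<open>i = Suc i'\<close> Suc i j W3u by (simp add: ext1_0S)
      qed
    qed
  qed (auto simp: ext1_def)
qed

lemma ext1_diag:
  assumes W3c: "W3 \<in> carrier_mat m m" and Bc: "B \<in> carrier_mat (Suc m) (Suc m)"
    and B00: "B $$ (0,0) = complex_of_real r"
    and B0S: "\<And>j. j < m \<Longrightarrow> B $$ (0,Suc j) = 0" and BS0: "\<And>j. j < m \<Longrightarrow> B $$ (Suc j,0) = 0"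
    and BSS: "\<And>i j. i < m \<Longrightarrow> j < m \<Longrightarrow> B $$ (Suc i,Suc j) = (W3 * diag_of m d3 * mat_adjoint W3) $$ (i,j)"
  shows "B = ext1 m W3 * diag_of (Suc m) (\<lambda>i. if i = 0 then r else d3 (i-1)) * mat_adjoint (ext1 m W3)"
proof (rule eq_matI)
  let ?W = "ext1 m W3"
  let ?d = "\<lambda>i. if i = 0 then r else d3 (i-1)"
  fix i j assume "i < dim_row (?W * diag_of (Suc m) ?d * mat_adjoint ?W)" "j < dim_col (?W * diag_of (Suc m) ?d * mat_adjoint ?W)"
  hence i: "i < Suc m" and j: "j < Suc m" by (auto simp: ext1_def)
  have "(?W * diag_of (Suc m) ?d * mat_adjoint ?W) $$ (i,j) = (\<Sum>k<Suc m. ?W $$ (i,k) * complex_of_real (?d k) * cnj (?W $$ (j,k)))"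
    by (rule diag_entry[OF ext1_carrier i j])
  also have "\<dots> = ?W $$ (i,0) * complex_of_real r * cnj (?W $$ (j,0)) + (\<Sum>k<m. ?W $$ (i,Suc k) * complex_of_real (d3 k) * cnj (?W $$ (j,Suc k)))"
    by (simp only: sum_Suc_split) simp
  also have "\<dots> = B $$ (i,j)"
  proof (cases i)
    case 0
    have s: "(\<Sum>k<m. ?W $$ (i,Suc k) * complex_of_real (d3 k) * cnj (?W $$ (j,Suc k))) = 0"
      using 0 by (intro sum.neutral) (simp add: ext1_0S)
    show ?thesis
    proof (cases j)
      case 0 then show ?thesis using s \<open>i = 0\<close> B00 by (simp add: ext1_00)
    next
      case (Suc j') then show ?thesis using s \<open>i = 0\<close> j B0S by (simp add: ext1_00 ext1_S0)
    qed
  next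
    case (Suc i')
    show ?thesis
    proof (cases j)
      case 0
      have s: "(\<Sum>k<m. ?W $$ (i,Suc k) * complex_of_real (d3 k) * cnj (?W $$ (j,Suc k))) = 0"
        using 0 by (intro sum.neutral) (simp add: ext1_0S)
      show ?thesis using s \<open>i = Suc i'\<close> 0 i BS0 by (simp add: ext1_S0)
    next
      case (Suc j')
      have "(\<Sum>k<m. ?W $$ (i,Suc k) * complex_of_real (d3 k) * cnj (?W $$ (j,Suc k))) = (\<Sum>k<m. W3 $$ (i',k) * complex_of_real (d3 k) * cnj (W3 $$ (j',k)))"
        using \<open>i = Suc i'\<close> Suc i j by (intro sum.cong) (simp_all add: ext1_SS)
      also have "\<dots> = (W3 * diag_of m d3 * mat_adjoint W3) $$ (i',j')"
        using diag_entry[OF W3c, of i' j' d3] \<open>i = Suc i'\<close> Suc i j by simp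
      also have "\<dots> = B $$ (i,j)" using BSS \<open>i = Suc i'\<close> Suc i j by simp
      finally show ?thesis using \<open>i = Suc i'\<close> Suc i j by (simp add: ext1_S0)
    qed
  qed
  finally show "B $$ (i,j) = (?W * diag_of (Suc m) ?d * mat_adjoint ?W) $$ (i,j)" by simp
qed (insert Bc, auto simp: ext1_def)


lemma conj_assoc:
  fixes X Y D :: "complex mat"
  assumes X: "X \<in> carrier_mat n n" and Y: "Y \<in> carrier_mat n n" and D: "D \<in> carrier_mat n n"
  shows "X * (Y * D * mat_adjoint Y) * mat_adjoint X = (X * Y) * D * mat_adjoint (X * Y)"
proof -
  have YD: "Y * D \<in> carrier_mat n n" using Y D by simp
  have XYD: "X * Y * D \<in> carrier_mat n n" using X Y D by simp
  have aY: "mat_adjoint Y \<in> carrier_mat n n" and aX: "mat_adjoint X \<in> carrier_mat n n" using X Y by auto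
  have "X * (Y * D * mat_adjoint Y) = X * (Y * D) * mat_adjoint Y"
    using assoc_mult_mat[OF X YD aY] by simp
  also have "X * (Y * D) = X * Y * D" using assoc_mult_mat[OF X Y D] by simp
  finally have "X * (Y * D * mat_adjoint Y) * mat_adjoint X = X * Y * D * mat_adjoint Y * mat_adjoint X" by simp
  also have "\<dots> = X * Y * D * (mat_adjoint Y * mat_adjoint X)" using assoc_mult_mat[OF XYD aY aX] .
  also have "mat_adjoint Y * mat_adjoint X = mat_adjoint (X * Y)" using X Y by (simp add: adj_mult)
  finally show ?thesis .
qed

lemma real_of_cnj: "(e::complex) = cnj e \<Longrightarrow> e = complex_of_real (Re e)"
  by (metis Reals_cnj_iff of_real_Re)

lemma spectral:
  fixes A :: "complex mat"
  shows "A \<in> carrier_mat n n \<Longrightarrow> mat_adjoint A = A \<Longrightarrow> \<exists>W d. unitary n W \<and> A = W * diag_of n d * mat_adjoint W"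
proof (induction n arbitrary: A)
  case 0
  have "A = 1\<^sub>m 0 * diag_of 0 (\<lambda>_. 0) * mat_adjoint (1\<^sub>m 0)"
    using 0 by (intro eq_matI) auto
  then show ?case using unitary_one by blast
next
  case (Suc m)
  define n where "n = Suc m"
  have A: "A \<in> carrier_mat n n" and H: "mat_adjoint A = A" using Suc.prems n_def by auto
  obtain e where "eigenvalue A e" using spectrum_non_empty[OF A] n_def by (auto simp: spectrum_def)
  then obtain v where "eigenvector A v e" unfolding eigenvalue_def by auto
  hence v: "v \<in> carrier_vec n" and v0: "v \<noteq> 0\<^sub>v n" and Av: "A *\<^sub>v v = e \<cdot>\<^sub>v v"
    using A unfolding eigenvector_def by auto
  obtain W0 c where W0: "unitary n W0" and col0: "\<forall>k<n. W0 $$ (k,0) = c * v $ k"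
    using unit_basis_exists[OF v v0] by blast
  have W0c: "W0 \<in> carrier_mat n n" and W0a: "mat_adjoint W0 \<in> carrier_mat n n"
    using W0 by (auto simp: unitary_def)
  have W0u: "mat_adjoint W0 * W0 = 1\<^sub>m n" "W0 * mat_adjoint W0 = 1\<^sub>m n" using W0 by (auto simp: unitary_def)
  define B where "B = mat_adjoint W0 * A * W0"
  have Bc: "B \<in> carrier_mat n n" unfolding B_def using A W0c W0a by auto
  have HB: "mat_adjoint B = B"
    using hermitian_conj[OF A H W0a] unfolding B_def by simp
  have n0: "0 < n" using n_def by simp
  have AW: "\<And>k. k < n \<Longrightarrow> (A * W0) $$ (k,0) = e * W0 $$ (k,0)"
  proof -
    fix k assume k: "k < n"
    have "(A * W0) $$ (k,0) = (\<Sum>l<n. A $$ (k,l) * (c * v $ l))"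
      using A W0c k n0 col0 by (auto intro!: sum.cong)
    also have "\<dots> = c * (A *\<^sub>v v) $ k"
      using A v k by (auto simp: scalar_prod_def atLeast0LessThan sum_distrib_left intro!: sum.cong)
    also have "\<dots> = e * W0 $$ (k,0)" using Av k v col0 by auto
    finally show "(A * W0) $$ (k,0) = e * W0 $$ (k,0)" .
  qed
  have Bcol: "\<And>i. i < n \<Longrightarrow> B $$ (i,0) = (if i = 0 then e else 0)"
  proof -
    fix i assume i: "i < n"
    have Bq: "B = mat_adjoint W0 * (A * W0)" unfolding B_def by (rule assoc_mult_mat[OF W0a A W0c])
    have "B $$ (i,0) = (\<Sum>k<n. mat_adjoint W0 $$ (i,k) * (A * W0) $$ (k,0))"
      unfolding Bq using mult_entry[of i "mat_adjoint W0" 0 "A*W0"] A W0c i n0 by (simp del: mult_entry)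
    also have "\<dots> = (\<Sum>k<n. cnj (W0 $$ (k,i)) * (e * W0 $$ (k,0)))"
      using W0c i n0 AW by (intro sum.cong) auto
    also have "\<dots> = e * (mat_adjoint W0 * W0) $$ (i,0)"
      using W0c i n0 by (auto simp: sum_distrib_left intro!: sum.cong)
    also have "\<dots> = (if i = 0 then e else 0)" using W0u i n0 by simp
    finally show "B $$ (i,0) = (if i = 0 then e else 0)" .
  qed
  have hB: "hermitian B" using HB Bc by (auto simp: hermitian_def square_mat.simps)
  have Brow: "\<And>j. j < n \<Longrightarrow> B $$ (0,j) = (if j = 0 then e else 0)"
  proof -
    fix j assume j: "j < n"
    have h: "B $$ (0,j) = cnj (B $$ (j,0))" using hermitian_entry[OF hB, of 0 j] j n0 Bc by simp
    have h0: "B $$ (0,0) = cnj (B $$ (0,0))" using hermitian_entry[OF hB, of 0 0] n0 Bc by simp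
    have "e = cnj e" using h0 unfolding Bcol[OF n0] by simp
    then show "B $$ (0,j) = (if j = 0 then e else 0)" unfolding h Bcol[OF j] by auto
  qed
  have ereal: "e = complex_of_real (Re e)"
  proof (rule real_of_cnj)
    have h0: "B $$ (0,0) = cnj (B $$ (0,0))" using hermitian_entry[OF hB, of 0 0] n0 Bc by simp
    then show "e = cnj e" unfolding Bcol[OF n0] by simp
  qed
  define A3 where "A3 = mat m m (\<lambda>(i,j). B $$ (Suc i, Suc j))"
  have A3c: "A3 \<in> carrier_mat m m" unfolding A3_def by simp
  have H3: "mat_adjoint A3 = A3"
  proof (rule eq_matI)
    fix i j assume "i < dim_row A3" "j < dim_col A3"
    hence i: "i < m" and j: "j < m" using A3c by auto
    show "mat_adjoint A3 $$ (i,j) = A3 $$ (i,j)"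
    proof -
      have "B $$ (Suc i, Suc j) = cnj (B $$ (Suc j, Suc i))"
        using i j hermitian_entry[OF hB, of "Suc i" "Suc j"] Bc n_def by simp
      then show ?thesis using i j by (simp add: A3_def)
    qed
  qed (insert A3c, auto)
  obtain W3 d3 where W3: "unitary m W3" and A3d: "A3 = W3 * diag_of m d3 * mat_adjoint W3"
    using Suc.IH[OF A3c H3] by blast
  have W3c: "W3 \<in> carrier_mat m m" using W3 by (auto simp: unitary_def)
  have W3u: "mat_adjoint W3 * W3 = 1\<^sub>m m" using W3 by (auto simp: unitary_def)
  define W1 where "W1 = ext1 m W3"
  define d where "d = (\<lambda>i. if i = 0 then Re e else d3 (i-1))"
  have W1c: "W1 \<in> carrier_mat n n" unfolding W1_def n_def by (rule ext1_carrier)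
  have W1u: "unitary n W1" unfolding W1_def n_def by (rule ext1_unitary[OF W3])
  have BW: "B = W1 * diag_of n d * mat_adjoint W1" unfolding W1_def d_def n_def
  proof (rule ext1_diag[OF W3c])
    show "B \<in> carrier_mat (Suc m) (Suc m)" using Bc n_def by simp
    have "B $$ (0,0) = e" using Bcol[OF n0] by simp
    then show "B $$ (0,0) = complex_of_real (Re e)" using ereal by (rule trans)
    show "\<And>j. j < m \<Longrightarrow> B $$ (0,Suc j) = 0" using Brow n_def by simp
    show "\<And>j. j < m \<Longrightarrow> B $$ (Suc j,0) = 0" using Bcol n_def by simp
    show "\<And>i j. i < m \<Longrightarrow> j < m \<Longrightarrow> B $$ (Suc i,Suc j) = (W3 * diag_of m d3 * mat_adjoint W3) $$ (i,j)"
      unfolding A3d[symmetric] by (simp add: A3_def)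
  qed
  have W1c': "mat_adjoint W1 \<in> carrier_mat n n" using W1c by auto
  have "A = W0 * B * mat_adjoint W0"
  proof -
    have XA: "mat_adjoint W0 * A \<in> carrier_mat n n" using W0a A by simp
    have "W0 * B = W0 * ((mat_adjoint W0 * A) * W0)" by (simp add: B_def)
    also have "\<dots> = (W0 * (mat_adjoint W0 * A)) * W0" using assoc_mult_mat[OF W0c XA W0c] by simp
    also have "W0 * (mat_adjoint W0 * A) = (W0 * mat_adjoint W0) * A" using assoc_mult_mat[OF W0c W0a A] by simp
    also have "\<dots> = A" using W0u A by simp
    finally have WB: "W0 * B = A * W0" .
    have "W0 * B * mat_adjoint W0 = A * (W0 * mat_adjoint W0)" unfolding WB using assoc_mult_mat[OF A W0c W0a] .
    then show ?thesis using W0u A by simp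
  qed
  also have "\<dots> = (W0 * W1) * diag_of n d * mat_adjoint (W0 * W1)"
    unfolding BW using W0c W1c by (rule conj_assoc) simp
  finally have "A = (W0 * W1) * diag_of n d * mat_adjoint (W0 * W1)" .
  moreover have "unitary n (W0 * W1)" using W0 W1u by (rule unitary_mult)
  ultimately show ?case unfolding n_def by blast
qed



lemma massoc: assumes "dim_col (A::complex mat) = dim_row B" "dim_col B = dim_row C" shows "A * B * C = A * (B * C)"
proof -
  have a: "A \<in> carrier_mat (dim_row A) (dim_row B)" using assms(1) by (intro carrier_matI) auto
  have b: "B \<in> carrier_mat (dim_row B) (dim_row C)" using assms(2) by (intro carrier_matI) auto
  show ?thesis using assoc_mult_mat[OF a b carrier_mat_triv] .
qed

lemma cD: "A \<in> carrier_mat n m \<Longrightarrow> dim_row A = n \<and> dim_col A = m" by auto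

lemma diag_left: "A \<in> carrier_mat n m \<Longrightarrow> i < n \<Longrightarrow> j < m \<Longrightarrow> (diag_of n d * A) $$ (i,j) = complex_of_real (d i) * A $$ (i,j)"
proof -
  assume A: "A \<in> carrier_mat n m" and i: "i < n" and j: "j < m"
  have "(diag_of n d * A) $$ (i,j) = (\<Sum>l<n. diag_of n d $$ (i,l) * A $$ (l,j))"
    using A i j by (subst mult_entry) auto
  also have "\<dots> = (\<Sum>l<n. if l = i then complex_of_real (d i) * A $$ (i,j) else 0)"
    using i by (intro sum.cong[OF refl]) (auto simp: diag_of_def)
  also have "\<dots> = complex_of_real (d i) * A $$ (i,j)" using i by simp
  finally show ?thesis .
qed

lemma diag_right: "A \<in> carrier_mat m n \<Longrightarrow> i < m \<Longrightarrow> j < n \<Longrightarrow> (A * diag_of n d) $$ (i,j) = A $$ (i,j) * complex_of_real (d j)"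
proof -
  assume A: "A \<in> carrier_mat m n" and i: "i < m" and j: "j < n"
  have "(A * diag_of n d) $$ (i,j) = (\<Sum>l<n. A $$ (i,l) * diag_of n d $$ (l,j))"
    using A i j by (subst mult_entry) auto
  also have "\<dots> = (\<Sum>l<n. if l = j then A $$ (i,j) * complex_of_real (d j) else 0)"
    using j by (intro sum.cong[OF refl]) (auto simp: diag_of_def)
  also have "\<dots> = A $$ (i,j) * complex_of_real (d j)" using j by simp
  finally show ?thesis .
qed

lemma ucancel:
  assumes "unitary n W" "dim_row X = n"
  shows "mat_adjoint W * (W * X) = X" "W * (mat_adjoint W * X) = X"
proof -
  have Wc: "W \<in> carrier_mat n n" using assms by (auto simp: unitary_def)
  note d = cD[OF Wc]
  show "mat_adjoint W * (W * X) = X" using assms d massoc[of "mat_adjoint W" W X]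
    by (simp add: unitary_def)
  show "W * (mat_adjoint W * X) = X" using assms d massoc[of W "mat_adjoint W" X]
    by (simp add: unitary_def)
qed

lemma fc_indep:
  assumes W: "unitary n W" and W': "unitary n W'"
    and eq: "W * diag_of n d * mat_adjoint W = W' * diag_of n d' * mat_adjoint W'"
  shows "W * diag_of n (\<lambda>i. h (d i)) * mat_adjoint W = W' * diag_of n (\<lambda>i. h (d' i)) * mat_adjoint W'"
proof -
  have Wc: "W \<in> carrier_mat n n" and W'c: "W' \<in> carrier_mat n n" using W W' by (auto simp: unitary_def)
  have Wu: "mat_adjoint W * W = 1\<^sub>m n" "W * mat_adjoint W = 1\<^sub>m n" using W by (auto simp: unitary_def)
  have W'u: "mat_adjoint W' * W' = 1\<^sub>m n" "W' * mat_adjoint W' = 1\<^sub>m n" using W' by (auto simp: unitary_def)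
  define A where "A = mat_adjoint W * W'"
  have Ac: "A \<in> carrier_mat n n" unfolding A_def using Wc W'c by (metis adj_carrier mult_carrier_mat)
  note dims = cD[OF Wc] cD[OF W'c] cD[OF Ac]
  have "diag_of n d * A = mat_adjoint W * (W * diag_of n d * mat_adjoint W) * W'"
    unfolding A_def using dims by (simp add: massoc ucancel[OF W])
  also have "\<dots> = mat_adjoint W * (W' * diag_of n d' * mat_adjoint W') * W'" unfolding eq ..
  also have "\<dots> = A * diag_of n d'"
    unfolding A_def using dims by (simp add: massoc ucancel[OF W'] W'u)
  finally have DA: "diag_of n d * A = A * diag_of n d'" .
  have HA: "diag_of n (\<lambda>i. h (d i)) * A = A * diag_of n (\<lambda>i. h (d' i))"
  proof (rule eq_matI)
    fix i j assume "i < dim_row (A * diag_of n (\<lambda>i. h (d' i)))" "j < dim_col (A * diag_of n (\<lambda>i. h (d' i)))"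
    hence i: "i < n" and j: "j < n" using Ac by auto
    have "complex_of_real (d i) * A $$ (i,j) = A $$ (i,j) * complex_of_real (d' j)"
      using arg_cong[OF DA, of "\<lambda>M. M $$ (i,j)"] diag_left[OF Ac i j] diag_right[OF Ac i j] by simp
    hence "A $$ (i,j) = 0 \<or> d i = d' j" by (auto simp: mult.commute)
    hence "complex_of_real (h (d i)) * A $$ (i,j) = A $$ (i,j) * complex_of_real (h (d' j))" by auto
    then show "(diag_of n (\<lambda>i. h (d i)) * A) $$ (i,j) = (A * diag_of n (\<lambda>i. h (d' i))) $$ (i,j)"
      using diag_left[OF Ac i j] diag_right[OF Ac i j] by simp
  qed (insert Ac, auto)
  have W'eq: "W' = W * A" unfolding A_def using dims by (simp add: massoc[symmetric] Wu)
  have AA: "A * mat_adjoint A = 1\<^sub>m n"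
    unfolding A_def using dims by (simp add: adj_mult massoc ucancel[OF W'] Wu)
  have "W' * diag_of n (\<lambda>i. h (d' i)) * mat_adjoint W' = W * (A * diag_of n (\<lambda>i. h (d' i))) * mat_adjoint A * mat_adjoint W"
    unfolding W'eq using dims by (simp add: adj_mult massoc)
  also have "\<dots> = W * diag_of n (\<lambda>i. h (d i)) * (A * mat_adjoint A) * mat_adjoint W"
    unfolding HA[symmetric] using dims by (simp add: massoc)
  also have "\<dots> = W * diag_of n (\<lambda>i. h (d i)) * mat_adjoint W" unfolding AA using dims by simp
  finally show ?thesis by simp
qed


definition decomp :: "complex mat \<Rightarrow> bool" where
  "decomp M \<longleftrightarrow> (\<exists>W d. unitary (dim_row M) W \<and> M = W * diag_of (dim_row M) d * mat_adjoint W)"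

lemma decomp_dim: "unitary n W \<Longrightarrow> M = W * diag_of n d * mat_adjoint W \<Longrightarrow> dim_row M = n \<and> dim_col M = n"
  by (auto simp: unitary_def)

lemma mfun_eq:
  assumes W: "unitary n W" and M: "M = W * diag_of n d * mat_adjoint W"
  shows "mfun f M = W * diag_of n (\<lambda>i. if d i = 0 then 0 else f (d i)) * mat_adjoint W"
proof -
  have n: "dim_row M = n" using decomp_dim[OF W M] by simp
  let ?h = "\<lambda>t. if t = 0 then 0 else f t"
  show ?thesis unfolding mfun_def n
  proof (rule some_equality)
    show "\<exists>W' d'. unitary n W' \<and> M = W' * diag_of n d' * mat_adjoint W' \<and>
        W * diag_of n (\<lambda>i. if d i = 0 then 0 else f (d i)) * mat_adjoint W = W' * diag_of n (\<lambda>i. if d' i = 0 then 0 else f (d' i)) * mat_adjoint W'"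
      using W M by blast
    fix N assume "\<exists>W' d'. unitary n W' \<and> M = W' * diag_of n d' * mat_adjoint W' \<and>
        N = W' * diag_of n (\<lambda>i. if d' i = 0 then 0 else f (d' i)) * mat_adjoint W'"
    then obtain W' d' where W': "unitary n W'" and M': "M = W' * diag_of n d' * mat_adjoint W'"
      and N: "N = W' * diag_of n (\<lambda>i. if d' i = 0 then 0 else f (d' i)) * mat_adjoint W'" by blast
    have "W' * diag_of n (\<lambda>i. ?h (d' i)) * mat_adjoint W' = W * diag_of n (\<lambda>i. ?h (d i)) * mat_adjoint W"
      by (rule fc_indep[OF W' W]) (use M M' in simp)
    then show "N = W * diag_of n (\<lambda>i. if d i = 0 then 0 else f (d i)) * mat_adjoint W" using N by simp
  qed
qed

lemma mfun_nodecomp: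
  assumes "\<not> decomp M" "\<not> decomp M'"
  shows "mfun f M = mfun g M'"
proof -
  have "(\<lambda>N. \<exists>W d. unitary (dim_row M) W \<and> M = W * diag_of (dim_row M) d * mat_adjoint W \<and>
       N = W * diag_of (dim_row M) (\<lambda>i. if d i = 0 then 0 else f (d i)) * mat_adjoint W) = (\<lambda>N. False)"
    using assms(1) unfolding decomp_def by blast
  moreover have "(\<lambda>N. \<exists>W d. unitary (dim_row M') W \<and> M' = W * diag_of (dim_row M') d * mat_adjoint W \<and>
       N = W * diag_of (dim_row M') (\<lambda>i. if d i = 0 then 0 else g (d i)) * mat_adjoint W) = (\<lambda>N. False)"
    using assms(2) unfolding decomp_def by blast
  ultimately show ?thesis unfolding mfun_def by simp
qed

lemma mfun_carrier: "decomp M \<Longrightarrow> mfun f M \<in> carrier_mat (dim_row M) (dim_row M)"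
proof -
  assume "decomp M"
  then obtain W d where W: "unitary (dim_row M) W" and M: "M = W * diag_of (dim_row M) d * mat_adjoint W"
    unfolding decomp_def by blast
  have Wc: "W \<in> carrier_mat (dim_row M) (dim_row M)" using W by (auto simp: unitary_def)
  show ?thesis unfolding mfun_eq[OF W M] using Wc by (metis adj_carrier diag_of_carrier mult_carrier_mat)
qed

lemma decomp_conj:
  assumes Q: "unitary n Q" and M: "M \<in> carrier_mat n n" and D: "decomp M"
  shows "decomp (Q * M * mat_adjoint Q) \<and> mfun f (Q * M * mat_adjoint Q) = Q * mfun f M * mat_adjoint Q"
proof -
  obtain W d where W: "unitary (dim_row M) W" and MW: "M = W * diag_of (dim_row M) d * mat_adjoint W"
    using D unfolding decomp_def by blast
  have n: "dim_row M = n" using M by simp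
  have W': "unitary n W" using W unfolding n .
  have MW': "M = W * diag_of n d * mat_adjoint W" using MW unfolding n .
  have Qc: "Q \<in> carrier_mat n n" and Wc: "W \<in> carrier_mat n n" using Q W' by (auto simp: unitary_def)
  have QW: "unitary n (Q * W)" using unitary_mult[OF Q W'] .
  have e: "Q * M * mat_adjoint Q = (Q * W) * diag_of n d * mat_adjoint (Q * W)"
    by (subst MW') (rule conj_assoc[OF Qc Wc diag_of_carrier])
  have n': "dim_row (Q * M * mat_adjoint Q) = n" using Qc by simp
  have "decomp (Q * M * mat_adjoint Q)" unfolding decomp_def n' using QW e by blast
  moreover have "mfun f (Q * M * mat_adjoint Q) = Q * mfun f M * mat_adjoint Q"
    unfolding mfun_eq[OF QW e] mfun_eq[OF W' MW'] using conj_assoc[OF Qc Wc diag_of_carrier] by simp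
  ultimately show ?thesis by blast
qed

lemma mfun_conj:
  assumes Q: "unitary n Q" and M: "M \<in> carrier_mat n n"
  shows "mfun f (Q * M * mat_adjoint Q) = (if decomp M then Q * mfun f M * mat_adjoint Q else mfun f M)"
proof (cases "decomp M")
  case True then show ?thesis using decomp_conj[OF Q M] by simp
next
  case False
  have "\<not> decomp (Q * M * mat_adjoint Q)"
  proof
    assume "decomp (Q * M * mat_adjoint Q)"
    moreover have QaQ: "unitary n (mat_adjoint Q)" using Q by (rule unitary_adj)
    moreover have "Q * M * mat_adjoint Q \<in> carrier_mat n n" using Q M by (auto simp: unitary_def)
    ultimately have "decomp (mat_adjoint Q * (Q * M * mat_adjoint Q) * mat_adjoint (mat_adjoint Q))"
      using decomp_conj by blast
    moreover have "mat_adjoint Q * (Q * M * mat_adjoint Q) * mat_adjoint (mat_adjoint Q) = M"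
    proof -
      have Qc: "Q \<in> carrier_mat n n" using Q by (auto simp: unitary_def)
      note d = cD[OF Qc] cD[OF M]
      show ?thesis using d by (simp add: massoc ucancel[OF Q] Q[unfolded unitary_def])
    qed
    ultimately show False using False by simp
  qed
  then show ?thesis using False mfun_nodecomp by simp
qed

lemma decomp_herm: "M \<in> carrier_mat n n \<Longrightarrow> mat_adjoint M = M \<Longrightarrow> decomp M"
  using spectral[of M n] unfolding decomp_def by auto



definition tidx :: "nat \<Rightarrow> nat \<Rightarrow> nat \<Rightarrow> nat \<Rightarrow> nat \<Rightarrow> nat" where
  "tidx b e x k i = (x*b+k)*e+i"

lemma tidx_lt: "x < a \<Longrightarrow> k < b \<Longrightarrow> i < e \<Longrightarrow> tidx b e x k i < a*b*e"
  unfolding tidx_def by (intro idx_lt) auto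

lemma tidx_parts:
  assumes "k < b" "i < e"
  shows "tidx b e x k i div e = x*b+k" "tidx b e x k i mod e = i"
    "tidx b e x k i div e div b = x" "tidx b e x k i div e mod b = k"
  using assms by (auto simp: tidx_def)

lemma tidx_alt: "k < b \<Longrightarrow> i < e \<Longrightarrow> tidx b e x k i = x * (b*e) + (k*e+i)"
  unfolding tidx_def by (simp add: algebra_simps)

lemma tidx_surj:
  assumes "I < a*b*e"
  shows "I = tidx b e (I div e div b) (I div e mod b) (I mod e) \<and> I div e div b < a \<and> I div e mod b < b \<and> I mod e < e"
proof -
  have e0: "e > 0" and b0: "b > 0" using assms by (auto intro: gr0I)
  have "I div e < a*b" using assms e0 by (simp add: less_mult_imp_div_less)
  hence "I div e div b < a" using b0 by (simp add: less_mult_imp_div_less)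
  moreover have "I = tidx b e (I div e div b) (I div e mod b) (I mod e)" unfolding tidx_def by simp
  ultimately show ?thesis using e0 b0 by simp
qed

lemma sum3: "(\<Sum>L<a*b*e. f L) = (\<Sum>x<a. \<Sum>k<b. \<Sum>i<e. f (tidx b e x k i))"
  unfolding tidx_def by (simp add: sum_split)

lemma sum_delta1:
  assumes "finite A" "x \<in> A" "\<And>y. y \<in> A \<Longrightarrow> y \<noteq> x \<Longrightarrow> g y = 0"
  shows "sum g A = g x"
proof -
  have "sum g A = g x + sum g (A - {x})" using assms by (simp add: sum.remove)
  also have "sum g (A - {x}) = 0" using assms by (intro sum.neutral) auto
  finally show ?thesis by simp
qed

lemma sum3_delta:
  fixes x a b e i :: nat
  assumes x: "x < a" and i: "i < e"
    and z: "\<And>x' k i'. x' < a \<Longrightarrow> k < b \<Longrightarrow> i' < e \<Longrightarrow> x' \<noteq> x \<or> i' \<noteq> i \<Longrightarrow> h x' k i' = 0"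
  shows "(\<Sum>x'<a. \<Sum>k<b. \<Sum>i'<e. h x' k i') = (\<Sum>k<b. h x k i)"
proof -
  have "(\<Sum>x'<a. \<Sum>k<b. \<Sum>i'<e. h x' k i') = (\<Sum>k<b. \<Sum>i'<e. h x k i')"
    using x z by (intro sum_delta1) (auto intro!: sum.neutral)
  also have "\<dots> = (\<Sum>k<b. h x k i)"
    using x i z by (intro sum.cong refl sum_delta1) auto
  finally show ?thesis .
qed

lemma prod3:
  assumes "dim_col A = a*b*e" "dim_row B = a*b*e" "I < dim_row A" "J < dim_col B"
  shows "(A * B) $$ (I,J) = (\<Sum>x<a. \<Sum>k<b. \<Sum>i<e. A $$ (I, tidx b e x k i) * B $$ (tidx b e x k i, J))"
  using assms by (simp add: sum3[of "\<lambda>L. A $$ (I,L) * B $$ (L,J)"])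

definition Qm :: "nat \<Rightarrow> nat \<Rightarrow> complex mat \<Rightarrow> complex mat" where
  "Qm a e V = kron (1\<^sub>m a) (kron V (1\<^sub>m e))"

lemma Qm_carrier: "V \<in> carrier_mat b b \<Longrightarrow> Qm a e V \<in> carrier_mat (a*b*e) (a*b*e)"
  unfolding Qm_def by (auto simp: mult.assoc)

lemma Qm_index:
  assumes V: "V \<in> carrier_mat b b" and "x < a" "y < a" "k < b" "k' < b" "i < e" "j < e"
  shows "Qm a e V $$ (tidx b e x k i, tidx b e y k' j) = (if x = y \<and> i = j then V $$ (k,k') else 0)"
proof -
  have R: "kron V (1\<^sub>m e) \<in> carrier_mat (b*e) (b*e)" using V by auto
  have p: "k*e+i < b*e" "k'*e+j < b*e" using assms by (auto intro: idx_lt)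
  have "Qm a e V $$ (tidx b e x k i, tidx b e y k' j) = 1\<^sub>m a $$ (x,y) * kron V (1\<^sub>m e) $$ (k*e+i, k'*e+j)"
    unfolding Qm_def using assms p R kron_index2[of x "1\<^sub>m a" "k*e+i" "kron V (1\<^sub>m e)" y "k'*e+j"]
    by (simp add: tidx_alt)
  also have "kron V (1\<^sub>m e) $$ (k*e+i, k'*e+j) = V $$ (k,k') * 1\<^sub>m e $$ (i,j)"
    using assms kron_index2[of k V i "1\<^sub>m e" k' j] by simp
  finally show ?thesis using assms by auto
qed

lemma Qm_adj: "mat_adjoint (Qm a e V) = Qm a e (mat_adjoint V)"
  unfolding Qm_def by (simp add: adj_kron)

lemma QL:
  assumes V: "V \<in> carrier_mat b b" and M: "dim_row M = a*b*e" and x: "x < a" and k: "k < b" and i: "i < e" and J: "J < dim_col M"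
  shows "(Qm a e V * M) $$ (tidx b e x k i, J) = (\<Sum>k'<b. V $$ (k,k') * M $$ (tidx b e x k' i, J))"
proof -
  have Qc: "Qm a e V \<in> carrier_mat (a*b*e) (a*b*e)" using Qm_carrier[OF V] .
  have "(Qm a e V * M) $$ (tidx b e x k i, J) = (\<Sum>x'<a. \<Sum>k'<b. \<Sum>i'<e. Qm a e V $$ (tidx b e x k i, tidx b e x' k' i') * M $$ (tidx b e x' k' i', J))"
    using Qc M J tidx_lt[OF x k i] by (intro prod3) auto
  also have "\<dots> = (\<Sum>k'<b. Qm a e V $$ (tidx b e x k i, tidx b e x k' i) * M $$ (tidx b e x k' i, J))"
    using x i by (intro sum3_delta) (auto simp: Qm_index[OF V] x k i)
  also have "\<dots> = (\<Sum>k'<b. V $$ (k,k') * M $$ (tidx b e x k' i, J))"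
    using x k i by (intro sum.cong refl) (simp add: Qm_index[OF V])
  finally show ?thesis .
qed

lemma QR:
  assumes V: "V \<in> carrier_mat b b" and M: "dim_col M = a*b*e" and y: "y < a" and k: "k < b" and j: "j < e" and I: "I < dim_row M"
  shows "(M * Qm a e V) $$ (I, tidx b e y k j) = (\<Sum>k'<b. M $$ (I, tidx b e y k' j) * V $$ (k',k))"
proof -
  have Qc: "Qm a e V \<in> carrier_mat (a*b*e) (a*b*e)" using Qm_carrier[OF V] .
  have "(M * Qm a e V) $$ (I, tidx b e y k j) = (\<Sum>x'<a. \<Sum>k'<b. \<Sum>i'<e. M $$ (I, tidx b e x' k' i') * Qm a e V $$ (tidx b e x' k' i', tidx b e y k j))"
    using Qc M I tidx_lt[OF y k j] by (intro prod3) auto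
  also have "\<dots> = (\<Sum>k'<b. M $$ (I, tidx b e y k' j) * Qm a e V $$ (tidx b e y k' j, tidx b e y k j))"
    using y j by (intro sum3_delta) (auto simp: Qm_index[OF V] y k j)
  also have "\<dots> = (\<Sum>k'<b. M $$ (I, tidx b e y k' j) * V $$ (k',k))"
    using y k j by (intro sum.cong refl) (simp add: Qm_index[OF V])
  finally show ?thesis .
qed


lemma swap3: "(\<Sum>x\<in>A. \<Sum>y\<in>B. \<Sum>z\<in>C. f x y z) = (\<Sum>z\<in>C. \<Sum>y\<in>B. \<Sum>x\<in>A. f x y z)"
proof -
  have "(\<Sum>x\<in>A. \<Sum>y\<in>B. \<Sum>z\<in>C. f x y z) = (\<Sum>x\<in>A. \<Sum>z\<in>C. \<Sum>y\<in>B. f x y z)"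
    by (rule sum.cong[OF refl], rule sum.swap)
  also have "\<dots> = (\<Sum>z\<in>C. \<Sum>x\<in>A. \<Sum>y\<in>B. f x y z)" by (rule sum.swap)
  also have "\<dots> = (\<Sum>z\<in>C. \<Sum>y\<in>B. \<Sum>x\<in>A. f x y z)"
    by (rule sum.cong[OF refl], rule sum.swap)
  finally show ?thesis .
qed

lemma pmid_entry:
  assumes "x < a" "y < a" "i < e" "j < e"
  shows "ptrace_mid a b e M $$ (x*e+i, y*e+j) = (\<Sum>k<b. M $$ (tidx b e x k i, tidx b e y k j))"
proof -
  have "x*e+i < a*e" "y*e+j < a*e" using assms by (auto intro: idx_lt)
  then show ?thesis using assms by (simp add: ptrace_mid_def tidx_def)
qed

lemma idx2_surj: "I < a*(e::nat) \<Longrightarrow> I = (I div e)*e + I mod e \<and> I div e < a \<and> I mod e < e"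
proof -
  assume I: "I < a*e"
  have e0: "e > 0" using I by (auto intro: gr0I)
  show ?thesis using I e0 by (simp add: less_mult_imp_div_less)
qed

lemma sum_one_delta: "k < b \<Longrightarrow> (\<Sum>k''<b. (1\<^sub>m b :: complex mat) $$ (k'',k) * f k'') = f k"
  by (subst sum_delta1[where x = k]) auto

lemma pmid_conj:
  assumes V: "unitary b V" and w: "dim_row w = a*b*e" "dim_col w = a*b*e"
  shows "ptrace_mid a b e (Qm a e V * w * mat_adjoint (Qm a e V)) = ptrace_mid a b e w"
proof (rule eq_matI)
  have Vc: "V \<in> carrier_mat b b" and Vu: "mat_adjoint V * V = 1\<^sub>m b" using V by (auto simp: unitary_def)
  have aVc: "mat_adjoint V \<in> carrier_mat b b" using Vc by auto
  have Qc: "Qm a e V \<in> carrier_mat (a*b*e) (a*b*e)" using Qm_carrier[OF Vc] .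
  fix I J assume "I < dim_row (ptrace_mid a b e w)" "J < dim_col (ptrace_mid a b e w)"
  hence I: "I < a*e" and J: "J < a*e" by (auto simp: ptrace_mid_def)
  define x where "x = I div e"
  define i where "i = I mod e"
  define y where "y = J div e"
  define j where "j = J mod e"
  have xi: "I = x*e+i" "x < a" "i < e" using idx2_surj[OF I] unfolding x_def i_def by auto
  have yj: "J = y*e+j" "y < a" "j < e" using idx2_surj[OF J] unfolding y_def j_def by auto
  let ?w = "\<lambda>k' k''. w $$ (tidx b e x k' i, tidx b e y k'' j)"
  have QW: "\<And>k k''. k < b \<Longrightarrow> k'' < b \<Longrightarrow> (Qm a e V * w) $$ (tidx b e x k i, tidx b e y k'' j) = (\<Sum>k'<b. V $$ (k,k') * ?w k' k'')"
    using QL[OF Vc _ xi(2) _ xi(3)] w tidx_lt[OF yj(2) _ yj(3)] by simp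
  have E: "\<And>k. k < b \<Longrightarrow> (Qm a e V * w * mat_adjoint (Qm a e V)) $$ (tidx b e x k i, tidx b e y k j)
       = (\<Sum>k''<b. (\<Sum>k'<b. V $$ (k,k') * ?w k' k'') * cnj (V $$ (k,k'')))"
  proof -
    fix k assume k: "k < b"
    have "(Qm a e V * w * mat_adjoint (Qm a e V)) $$ (tidx b e x k i, tidx b e y k j)
        = (\<Sum>k''<b. (Qm a e V * w) $$ (tidx b e x k i, tidx b e y k'' j) * mat_adjoint V $$ (k'',k))"
      unfolding Qm_adj using QR[OF aVc _ yj(2) k yj(3), of "Qm a e V * w"] Qc w tidx_lt[OF xi(2) k xi(3)] by simp
    also have "\<dots> = (\<Sum>k''<b. (\<Sum>k'<b. V $$ (k,k') * ?w k' k'') * cnj (V $$ (k,k'')))"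
      using k Vc by (intro sum.cong refl) (simp add: QW)
    finally show "(Qm a e V * w * mat_adjoint (Qm a e V)) $$ (tidx b e x k i, tidx b e y k j)
       = (\<Sum>k''<b. (\<Sum>k'<b. V $$ (k,k') * ?w k' k'') * cnj (V $$ (k,k'')))" .
  qed
  have "ptrace_mid a b e (Qm a e V * w * mat_adjoint (Qm a e V)) $$ (I,J)
      = (\<Sum>k<b. \<Sum>k''<b. (\<Sum>k'<b. V $$ (k,k') * ?w k' k'') * cnj (V $$ (k,k'')))"
    unfolding xi(1) yj(1) pmid_entry[OF xi(2) yj(2) xi(3) yj(3)] using E by simp
  also have "\<dots> = (\<Sum>k<b. \<Sum>k''<b. \<Sum>k'<b. cnj (V $$ (k,k'')) * V $$ (k,k') * ?w k' k'')"
    by (simp add: sum_distrib_left sum_distrib_right mult_ac)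
  also have "\<dots> = (\<Sum>k'<b. \<Sum>k''<b. \<Sum>k<b. cnj (V $$ (k,k'')) * V $$ (k,k') * ?w k' k'')"
    by (rule swap3)
  also have "\<dots> = (\<Sum>k'<b. \<Sum>k''<b. (mat_adjoint V * V) $$ (k'',k') * ?w k' k'')"
    using Vc by (intro sum.cong refl) (simp add: sum_distrib_right)
  also have "\<dots> = (\<Sum>k'<b. ?w k' k')"
    unfolding Vu by (intro sum.cong refl sum_one_delta) simp
  also have "\<dots> = ptrace_mid a b e w $$ (I,J)"
    unfolding xi(1) yj(1) pmid_entry[OF xi(2) yj(2) xi(3) yj(3)] ..
  finally show "ptrace_mid a b e (Qm a e V * w * mat_adjoint (Qm a e V)) $$ (I,J) = ptrace_mid a b e w $$ (I,J)" .
qed (auto simp: ptrace_mid_def)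


lemma pleft_mid: "ptrace_left (a*b) e M = ptrace_left a e (ptrace_mid a b e M)"
proof (rule eq_matI)
  fix i j assume "i < dim_row (ptrace_left a e (ptrace_mid a b e M))" "j < dim_col (ptrace_left a e (ptrace_mid a b e M))"
  hence i: "i < e" and j: "j < e" by (auto simp: ptrace_left_def)
  have "ptrace_left (a*b) e M $$ (i,j) = (\<Sum>s<a*b. M $$ (s*e+i, s*e+j))" using i j by (simp add: ptrace_left_def)
  also have "\<dots> = (\<Sum>x<a. \<Sum>k<b. M $$ (tidx b e x k i, tidx b e x k j))" by (simp add: sum_split tidx_def)
  also have "\<dots> = (\<Sum>x<a. ptrace_mid a b e M $$ (x*e+i, x*e+j))"
    using i j by (intro sum.cong refl) (simp add: pmid_entry)
  also have "\<dots> = ptrace_left a e (ptrace_mid a b e M) $$ (i,j)" using i j by (simp add: ptrace_left_def)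
  finally show "ptrace_left (a*b) e M $$ (i,j) = ptrace_left a e (ptrace_mid a b e M) $$ (i,j)" .
qed (auto simp: ptrace_left_def)

lemma embed_index:
  assumes "x < a" "y < a" "k < b" "k' < b" "i < e" "j < e"
  shows "embed_mid a b e X $$ (tidx b e x k i, tidx b e y k' j) = (if k = k' then X $$ (x*e+i, y*e+j) else 0)"
  using assms tidx_lt[of x a k b i e] tidx_lt[of y a k' b j e]
  by (simp add: embed_mid_def tidx_parts)

lemma embed_carrier: "embed_mid a b e X \<in> carrier_mat (a*b*e) (a*b*e)"
  by (simp add: embed_mid_def)

lemma embed_comm:
  assumes Vc: "V \<in> carrier_mat b b"
  shows "Qm a e V * embed_mid a b e X = embed_mid a b e X * Qm a e V"
proof (rule eq_matI)
  have Qc: "Qm a e V \<in> carrier_mat (a*b*e) (a*b*e)" using Qm_carrier[OF Vc] .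
  have Sc: "embed_mid a b e X \<in> carrier_mat (a*b*e) (a*b*e)" by (rule embed_carrier)
  fix I J assume "I < dim_row (embed_mid a b e X * Qm a e V)" "J < dim_col (embed_mid a b e X * Qm a e V)"
  hence I: "I < a*b*e" and J: "J < a*b*e" using Qc Sc by auto
  obtain x k i where xki: "I = tidx b e x k i" "x < a" "k < b" "i < e" using tidx_surj[OF I] by blast
  obtain y k' j where ykj: "J = tidx b e y k' j" "y < a" "k' < b" "j < e" using tidx_surj[OF J] by blast
  have "(Qm a e V * embed_mid a b e X) $$ (I,J) = (\<Sum>k''<b. V $$ (k,k'') * embed_mid a b e X $$ (tidx b e x k'' i, J))"
    unfolding xki(1) using QL[OF Vc _ xki(2-4)] Sc J by simp
  also have "\<dots> = (\<Sum>k''<b. if k'' = k' then V $$ (k,k') * X $$ (x*e+i, y*e+j) else 0)"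
    unfolding ykj(1) using xki ykj by (intro sum.cong refl) (simp add: embed_index)
  also have "\<dots> = V $$ (k,k') * X $$ (x*e+i, y*e+j)" using ykj by simp
  also have "\<dots> = (\<Sum>k''<b. if k'' = k then X $$ (x*e+i, y*e+j) * V $$ (k,k') else 0)" using xki by simp
  also have "\<dots> = (\<Sum>k''<b. embed_mid a b e X $$ (I, tidx b e y k'' j) * V $$ (k'',k'))"
    unfolding xki(1) using xki ykj by (intro sum.cong refl) (simp add: embed_index)
  also have "\<dots> = (embed_mid a b e X * Qm a e V) $$ (I,J)"
    unfolding ykj(1) using QR[OF Vc _ ykj(2-4)] Sc I by simp
  finally show "(Qm a e V * embed_mid a b e X) $$ (I,J) = (embed_mid a b e X * Qm a e V) $$ (I,J)" .
qed (insert Qm_carrier[OF Vc, of a e], auto simp: embed_mid_def)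


lemma kron1_index:
  assumes R: "R \<in> carrier_mat m m" and "x < a" "y < a" "p < m" "q < m"
  shows "kron (1\<^sub>m a) R $$ (x*m+p, y*m+q) = (if x = y then R $$ (p,q) else 0)"
  using kron_index2[of x "1\<^sub>m a" p R y q] assms by simp

lemma KL:
  assumes R: "R \<in> carrier_mat m m" and M: "dim_row M = a*m" and x: "x < a" and p: "p < m" and J: "J < dim_col M"
  shows "(kron (1\<^sub>m a) R * M) $$ (x*m+p, J) = (\<Sum>q<m. R $$ (p,q) * M $$ (x*m+q, J))"
proof -
  have xp: "x*m+p < a*m" using x p by (rule idx_lt)
  have "(kron (1\<^sub>m a) R * M) $$ (x*m+p, J) = (\<Sum>L<a*m. kron (1\<^sub>m a) R $$ (x*m+p, L) * M $$ (L,J))"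
    using R M J xp by (subst mult_entry) auto
  also have "\<dots> = (\<Sum>y<a. \<Sum>q<m. kron (1\<^sub>m a) R $$ (x*m+p, y*m+q) * M $$ (y*m+q,J))" by (rule sum_split)
  also have "\<dots> = (\<Sum>q<m. kron (1\<^sub>m a) R $$ (x*m+p, x*m+q) * M $$ (x*m+q,J))"
    using x p R by (intro sum_delta1) (auto intro!: sum.neutral simp: kron1_index[OF R])
  also have "\<dots> = (\<Sum>q<m. R $$ (p,q) * M $$ (x*m+q, J))"
    using x p R by (intro sum.cong refl) (auto simp: kron1_index[OF R])
  finally show ?thesis .
qed

lemma KR:
  assumes R: "R \<in> carrier_mat m m" and M: "dim_col M = a*m" and y: "y < a" and p: "p < m" and I: "I < dim_row M"
  shows "(M * kron (1\<^sub>m a) R) $$ (I, y*m+p) = (\<Sum>q<m. M $$ (I, y*m+q) * R $$ (q,p))"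
proof -
  have yp: "y*m+p < a*m" using y p by (rule idx_lt)
  have "(M * kron (1\<^sub>m a) R) $$ (I, y*m+p) = (\<Sum>L<a*m. M $$ (I,L) * kron (1\<^sub>m a) R $$ (L, y*m+p))"
    using R M I yp by (subst mult_entry) auto
  also have "\<dots> = (\<Sum>x<a. \<Sum>q<m. M $$ (I,x*m+q) * kron (1\<^sub>m a) R $$ (x*m+q, y*m+p))" by (rule sum_split)
  also have "\<dots> = (\<Sum>q<m. M $$ (I,y*m+q) * kron (1\<^sub>m a) R $$ (y*m+q, y*m+p))"
    using y p R by (intro sum_delta1) (auto intro!: sum.neutral simp: kron1_index[OF R])
  also have "\<dots> = (\<Sum>q<m. M $$ (I, y*m+q) * R $$ (q,p))"
    using y p R by (intro sum.cong refl) (auto simp: kron1_index[OF R])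
  finally show ?thesis .
qed

lemma pleft_conj:
  assumes R: "R \<in> carrier_mat m m" and M: "M \<in> carrier_mat (a*m) (a*m)"
  shows "ptrace_left a m (kron (1\<^sub>m a) R * M * mat_adjoint (kron (1\<^sub>m a) R)) = R * ptrace_left a m M * mat_adjoint R"
proof (rule eq_matI)
  have aR: "mat_adjoint R \<in> carrier_mat m m" using R by auto
  have Kc: "kron (1\<^sub>m a) R \<in> carrier_mat (a*m) (a*m)" using R by auto
  have N: "ptrace_left a m M \<in> carrier_mat m m" by (simp add: ptrace_left_def)
  fix i j assume "i < dim_row (R * ptrace_left a m M * mat_adjoint R)" "j < dim_col (R * ptrace_left a m M * mat_adjoint R)"
  hence i: "i < m" and j: "j < m" using R by auto
  let ?K = "kron (1\<^sub>m a) R"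
  have adjK: "mat_adjoint ?K = kron (1\<^sub>m a) (mat_adjoint R)" by (simp add: adj_kron)
  have E: "\<And>x. x < a \<Longrightarrow> (?K * M * mat_adjoint ?K) $$ (x*m+i, x*m+j) = (\<Sum>r<m. (\<Sum>q<m. R $$ (i,q) * M $$ (x*m+q, x*m+r)) * cnj (R $$ (j,r)))"
  proof -
    fix x assume x: "x < a"
    have "(?K * M * mat_adjoint ?K) $$ (x*m+i, x*m+j) = (\<Sum>r<m. (?K * M) $$ (x*m+i, x*m+r) * mat_adjoint R $$ (r,j))"
      unfolding adjK using KR[OF aR, where M="?K * M" and y=x and p=j and I="x*m+i" and a=a] Kc M idx_lt[OF x i] x j cD[OF R] by simp
    also have "\<dots> = (\<Sum>r<m. (\<Sum>q<m. R $$ (i,q) * M $$ (x*m+q, x*m+r)) * cnj (R $$ (j,r)))"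
      using KL[OF R _ x i] M R j idx_lt[OF x] by (intro sum.cong refl) auto
    finally show "(?K * M * mat_adjoint ?K) $$ (x*m+i, x*m+j) = (\<Sum>r<m. (\<Sum>q<m. R $$ (i,q) * M $$ (x*m+q, x*m+r)) * cnj (R $$ (j,r)))" .
  qed
  have "ptrace_left a m (?K * M * mat_adjoint ?K) $$ (i,j) = (\<Sum>x<a. (?K * M * mat_adjoint ?K) $$ (x*m+i, x*m+j))"
    using i j by (simp add: ptrace_left_def)
  also have "\<dots> = (\<Sum>x<a. \<Sum>r<m. (\<Sum>q<m. R $$ (i,q) * M $$ (x*m+q, x*m+r)) * cnj (R $$ (j,r)))"
    using E by (intro sum.cong refl) auto
  also have "\<dots> = (\<Sum>x<a. \<Sum>r<m. \<Sum>q<m. R $$ (i,q) * M $$ (x*m+q, x*m+r) * cnj (R $$ (j,r)))"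
    by (simp add: sum_distrib_right)
  also have "\<dots> = (\<Sum>q<m. \<Sum>r<m. \<Sum>x<a. R $$ (i,q) * M $$ (x*m+q, x*m+r) * cnj (R $$ (j,r)))"
    by (rule swap3)
  also have "\<dots> = (\<Sum>r<m. \<Sum>q<m. R $$ (i,q) * ptrace_left a m M $$ (q,r) * cnj (R $$ (j,r)))"
    by (subst sum.swap) (auto simp: ptrace_left_def sum_distrib_left sum_distrib_right intro!: sum.cong)
  also have "\<dots> = (\<Sum>r<m. (R * ptrace_left a m M) $$ (i,r) * cnj (R $$ (j,r)))"
    using R N i by (intro sum.cong refl) (auto simp: sum_distrib_right)
  also have "\<dots> = (R * ptrace_left a m M * mat_adjoint R) $$ (i,j)"
    using R N i j by (subst mult_entry) (auto intro!: sum.cong)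
  finally show "ptrace_left a m (?K * M * mat_adjoint ?K) $$ (i,j) = (R * ptrace_left a m M * mat_adjoint R) $$ (i,j)" .
qed (insert R, auto simp: ptrace_left_def)


lemma pleft_herm:
  assumes M: "M \<in> carrier_mat (n*m) (n*m)" and H: "mat_adjoint M = M"
  shows "mat_adjoint (ptrace_left n m M) = ptrace_left n m M"
proof (rule eq_matI)
  fix i j assume "i < dim_row (ptrace_left n m M)" "j < dim_col (ptrace_left n m M)"
  hence i: "i < m" and j: "j < m" by (auto simp: ptrace_left_def)
  have h: "\<And>p q. p < n*m \<Longrightarrow> q < n*m \<Longrightarrow> M $$ (p,q) = cnj (M $$ (q,p))"
  proof -
    fix p q assume "p < n*m" "q < n*m"
    then have "mat_adjoint M $$ (p,q) = cnj (M $$ (q,p))" using M by simp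
    then show "M $$ (p,q) = cnj (M $$ (q,p))" unfolding H .
  qed
  have "mat_adjoint (ptrace_left n m M) $$ (i,j) = (\<Sum>s<n. cnj (M $$ (s*m+j, s*m+i)))"
    using i j by (simp add: ptrace_left_def cnj_sum)
  also have "\<dots> = (\<Sum>s<n. M $$ (s*m+i, s*m+j))"
  proof (intro sum.cong refl)
    fix x assume "x \<in> {..<n}"
    then have "x*m+i < n*m" "x*m+j < n*m" using i j by (auto intro: idx_lt)
    then show "cnj (M $$ (x*m+j, x*m+i)) = M $$ (x*m+i, x*m+j)" using h[of "x*m+i" "x*m+j"] by simp
  qed
  also have "\<dots> = ptrace_left n m M $$ (i,j)" using i j by (simp add: ptrace_left_def)
  finally show "mat_adjoint (ptrace_left n m M) $$ (i,j) = ptrace_left n m M $$ (i,j)" .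
qed (auto simp: ptrace_left_def)

lemma trace_conj:
  assumes R: "unitary n R" and X: "X \<in> carrier_mat n n"
  shows "mtrace (R * X * mat_adjoint R) = mtrace X"
proof -
  have Rc: "R \<in> carrier_mat n n" and aR: "mat_adjoint R \<in> carrier_mat n n" using R by (auto simp: unitary_def)
  have "mtrace (R * X * mat_adjoint R) = mtrace (mat_adjoint R * (R * X))"
    using Rc X aR by (intro mtrace_comm) auto
  also have "mat_adjoint R * (R * X) = X" using ucancel[OF R] X by simp
  finally show ?thesis .
qed

lemma Qm_unitary: "unitary b V \<Longrightarrow> unitary (a*b*e) (Qm a e V)"
  unfolding Qm_def using unitary_kron[OF unitary_one unitary_kron[OF _ unitary_one]]
  by (simp add: mult.assoc)



lemma cmi_inv:
  assumes V: "unitary b V" and w: "w \<in> carrier_mat (a*b*e) (a*b*e)" and H: "mat_adjoint w = w"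
  shows "renyi_cmi \<alpha> a b e (Qm a e V * w * mat_adjoint (Qm a e V)) = renyi_cmi \<alpha> a b e w"
proof -
  define Q where "Q = Qm a e V"
  define R where "R = kron V (1\<^sub>m e)"
  have Vc: "V \<in> carrier_mat b b" using V by (auto simp: unitary_def)
  have aVc: "mat_adjoint V \<in> carrier_mat b b" using Vc by auto
  have Rc: "R \<in> carrier_mat (b*e) (b*e)" unfolding R_def using Vc by auto
  have Ru: "unitary (b*e) R" unfolding R_def by (rule unitary_kron[OF V unitary_one])
  have aR: "mat_adjoint R = kron (mat_adjoint V) (1\<^sub>m e)" unfolding R_def by (simp add: adj_kron)
  have aRc: "mat_adjoint R \<in> carrier_mat (b*e) (b*e)" using Rc by auto
  have QR: "Q = kron (1\<^sub>m a) R" unfolding Q_def R_def Qm_def ..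
  have Qu: "unitary (a*b*e) Q" unfolding Q_def by (rule Qm_unitary[OF V])
  have Qc: "Q \<in> carrier_mat (a*b*e) (a*b*e)" using Qu by (auto simp: unitary_def)
  have aQc: "mat_adjoint Q \<in> carrier_mat (a*b*e) (a*b*e)" using Qc by auto
  have aQ: "mat_adjoint Q = Qm a e (mat_adjoint V)" unfolding Q_def by (rule Qm_adj)
  have wd: "dim_row w = a*b*e" "dim_col w = a*b*e" using w by auto
  define w' where "w' = Q * w * mat_adjoint Q"
  have r1: "ptrace_mid a b e w' = ptrace_mid a b e w" unfolding w'_def Q_def by (rule pmid_conj[OF V wd])
  have r2: "ptrace_left (a*b) e w' = ptrace_left (a*b) e w" by (simp add: pleft_mid r1)
  define S where "S = embed_mid a b e (mpow (ptrace_mid a b e w) ((1 - \<alpha>) / 2))"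
  have Sc: "S \<in> carrier_mat (a*b*e) (a*b*e)" unfolding S_def by (rule embed_carrier)
  have SQ: "Q * S = S * Q" unfolding Q_def S_def by (rule embed_comm[OF Vc])
  have SaQ: "mat_adjoint Q * S = S * mat_adjoint Q" unfolding aQ S_def by (rule embed_comm[OF aVc])
  define rE where "rE = ptrace_left (a*b) e w"
  have rEc: "rE \<in> carrier_mat e e" unfolding rE_def by (simp add: ptrace_left_def)
  have rEh: "mat_adjoint rE = rE" unfolding rE_def by (rule pleft_herm[OF w H])
  have rEd: "decomp rE" by (rule decomp_herm[OF rEc rEh])
  define Y where "Y = mpow rE ((\<alpha> - 1) / 2)"
  have Yc: "Y \<in> carrier_mat e e" unfolding Y_def mpow_def using mfun_carrier[OF rEd] rEc by simp
  define T where "T = kron (1\<^sub>m b) Y"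
  have Tc: "T \<in> carrier_mat (b*e) (b*e)" unfolding T_def using Yc by auto
  have TR: "T * R = R * T" unfolding T_def R_def
    using kron_mult[of "1\<^sub>m b" b b Y e e V b "1\<^sub>m e" e] kron_mult[of V b b "1\<^sub>m e" e e "1\<^sub>m b" b Y e] Vc Yc by simp
  have TaR: "T * mat_adjoint R = mat_adjoint R * T" unfolding T_def aR
    using kron_mult[of "1\<^sub>m b" b b Y e e "mat_adjoint V" b "1\<^sub>m e" e] kron_mult[of "mat_adjoint V" b b "1\<^sub>m e" e e "1\<^sub>m b" b Y e] aVc Yc cD[OF aVc] cD[OF Yc] by simp
  define inner0 where "inner0 = ptrace_left a (b*e) (S * mpow w \<alpha> * S)"
  have inner0c: "inner0 \<in> carrier_mat (b*e) (b*e)" unfolding inner0_def by (simp add: ptrace_left_def)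
  define outer0 where "outer0 = T * inner0 * T"
  have outer0c: "outer0 \<in> carrier_mat (b*e) (b*e)" unfolding outer0_def using Tc inner0c by auto
  have mw: "mpow w' \<alpha> = (if decomp w then Q * mpow w \<alpha> * mat_adjoint Q else mpow w \<alpha>)"
    unfolding mpow_def w'_def by (rule mfun_conj[OF Qu w])
  have inner: "ptrace_left a (b*e) (S * mpow w' \<alpha> * S) = (if decomp w then R * inner0 * mat_adjoint R else inner0)"
  proof (cases "decomp w")
    case True
    define P where "P = mpow w \<alpha>"
    have Pc: "P \<in> carrier_mat (a*b*e) (a*b*e)" unfolding P_def mpow_def using mfun_carrier[OF True] wd by simp
    note d = cD[OF Qc] cD[OF aQc] cD[OF Sc] cD[OF Pc]
    have "S * (Q * P * mat_adjoint Q) * S = (S * Q) * P * (mat_adjoint Q * S)"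
      using d by (simp add: massoc)
    also have "\<dots> = Q * (S * P * S) * mat_adjoint Q"
      unfolding SQ[symmetric] SaQ using d by (simp add: massoc)
    finally have e1: "S * (Q * P * mat_adjoint Q) * S = Q * (S * P * S) * mat_adjoint Q" .
    have SPS: "S * P * S \<in> carrier_mat (a*(b*e)) (a*(b*e))" using Sc Pc by (simp add: mult.assoc[symmetric])
    have "ptrace_left a (b*e) (S * mpow w' \<alpha> * S) = ptrace_left a (b*e) (Q * (S * P * S) * mat_adjoint Q)"
      using mw True e1 unfolding P_def by simp
    also have "\<dots> = R * inner0 * mat_adjoint R"
      unfolding QR inner0_def P_def[symmetric] by (rule pleft_conj[OF Rc SPS])
    finally show ?thesis using True by simp
  next
    case False
    then show ?thesis using mw unfolding inner0_def by simp
  qed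
  have outer: "T * ptrace_left a (b*e) (S * mpow w' \<alpha> * S) * T = (if decomp w then R * outer0 * mat_adjoint R else outer0)"
  proof (cases "decomp w")
    case True
    note d = cD[OF Tc] cD[OF Rc] cD[OF aRc] cD[OF inner0c]
    have "T * (R * inner0 * mat_adjoint R) * T = (T * R) * inner0 * (mat_adjoint R * T)"
      using d by (simp add: massoc)
    also have "\<dots> = R * outer0 * mat_adjoint R"
      unfolding TR TaR[symmetric] outer0_def using d by (simp add: massoc)
    finally show ?thesis using True inner by simp
  next
    case False
    then show ?thesis using inner unfolding outer0_def by simp
  qed
  have final: "mtrace (mpow (T * ptrace_left a (b*e) (S * mpow w' \<alpha> * S) * T) (1/\<alpha>)) = mtrace (mpow outer0 (1/\<alpha>))"
  proof (cases "decomp w")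
    case True
    have "mpow (R * outer0 * mat_adjoint R) (1/\<alpha>) = (if decomp outer0 then R * mpow outer0 (1/\<alpha>) * mat_adjoint R else mpow outer0 (1/\<alpha>))"
      unfolding mpow_def by (rule mfun_conj[OF Ru outer0c])
    moreover have "decomp outer0 \<Longrightarrow> mtrace (R * mpow outer0 (1/\<alpha>) * mat_adjoint R) = mtrace (mpow outer0 (1/\<alpha>))"
      using trace_conj[OF Ru] mfun_carrier[of outer0] outer0c unfolding mpow_def by simp
    ultimately show ?thesis unfolding outer using True by auto
  next
    case False
    then show ?thesis unfolding outer by simp
  qed
  show ?thesis
    unfolding renyi_cmi_def Let_def w'_def[symmetric] Q_def[symmetric] r1 r2
      S_def[symmetric] rE_def[symmetric] Y_def[symmetric] T_def[symmetric] final
    unfolding outer0_def inner0_def ..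
qed



lemma swap_carrier: "swap_mat N B \<in> carrier_mat (N*B) (N*B)" by (simp add: swap_mat_def)

lemma swap_comm:
  assumes Vc: "V \<in> carrier_mat B B"
  shows "swap_mat N B * kron (1\<^sub>m N) V = kron V (1\<^sub>m N) * swap_mat N B"
proof (rule eq_matI)
  fix r c assume "r < dim_row (kron V (1\<^sub>m N) * swap_mat N B)" "c < dim_col (kron V (1\<^sub>m N) * swap_mat N B)"
  hence r: "r < N*B" and c: "c < N*B" using Vc by (auto simp: swap_mat_def mult.commute)
  have N0: "N > 0" and B0: "B > 0" using r by (auto intro: gr0I)
  have rb: "r div N < B" "r mod N < N" using r N0 by (auto simp: less_mult_imp_div_less mult.commute)
  have cb: "c div B < N" "c mod B < B" using c B0 by (auto simp: less_mult_imp_div_less)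
  define l0 where "l0 = (r mod N) * B + r div N"
  have l0: "l0 < N*B" unfolding l0_def using rb by (intro idx_lt)
  have l0e: "(l0 mod B) * N + l0 div B = r" unfolding l0_def using rb by simp
  have uniq: "\<And>l. l < N*B \<Longrightarrow> r = (l mod B) * N + l div B \<Longrightarrow> l = l0"
  proof -
    fix l assume l: "l < N*B" and rl: "r = (l mod B) * N + l div B"
    have "l div B < N" using l B0 by (simp add: less_mult_imp_div_less)
    hence "r mod N = l div B" "r div N = l mod B" using rl by (simp_all add: add.commute mult.commute)
    thus "l = l0" unfolding l0_def by simp
  qed
  define c0 where "c0 = (c mod B) * N + c div B"
  have "c0 < B*N" unfolding c0_def using cb by (intro idx_lt)
  hence c0: "c0 < N*B" by (simp add: mult.commute)
  have Kc: "kron (1\<^sub>m N) V \<in> carrier_mat (N*B) (N*B)" using Vc by auto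
  have K'c: "kron V (1\<^sub>m N) \<in> carrier_mat (B*N) (B*N)" using Vc by auto
  have "(swap_mat N B * kron (1\<^sub>m N) V) $$ (r,c) = (\<Sum>l<N*B. swap_mat N B $$ (r,l) * kron (1\<^sub>m N) V $$ (l,c))"
    using r c Kc cD[OF Vc] by (subst mult_entry) (auto simp: swap_mat_def)
  also have "\<dots> = swap_mat N B $$ (r,l0) * kron (1\<^sub>m N) V $$ (l0,c)"
    using l0 r by (intro sum_delta1) (auto simp: swap_mat_def dest: uniq)
  also have "\<dots> = kron (1\<^sub>m N) V $$ (l0,c)" using l0 r l0e by (simp add: swap_mat_def)
  also have "\<dots> = (if r mod N = c div B then V $$ (r div N, c mod B) else 0)"
    using l0 c Vc rb cb B0 by (simp add: kron_index l0_def)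
  also have "\<dots> = kron V (1\<^sub>m N) $$ (r, c0)"
    using r c0 Vc rb cb N0 by (simp add: kron_index c0_def mult.commute)
  also have "\<dots> = kron V (1\<^sub>m N) $$ (r, c0) * swap_mat N B $$ (c0, c)"
    using c0 c by (simp add: swap_mat_def c0_def)
  also have "\<dots> = (\<Sum>l<N*B. kron V (1\<^sub>m N) $$ (r,l) * swap_mat N B $$ (l,c))"
    using c0 c by (intro sum_delta1[symmetric]) (auto simp: swap_mat_def c0_def)
  also have "\<dots> = (kron V (1\<^sub>m N) * swap_mat N B) $$ (r,c)"
    using r c K'c cD[OF Vc] by (subst mult_entry) (auto simp: swap_mat_def mult.commute[of B N])
  finally show "(swap_mat N B * kron (1\<^sub>m N) V) $$ (r,c) = (kron V (1\<^sub>m N) * swap_mat N B) $$ (r,c)" .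
qed (insert Vc, auto simp: swap_mat_def mult.commute)


lemma conj_comp:
  fixes A B M :: "complex mat"
  assumes A: "A \<in> carrier_mat p q" and B: "B \<in> carrier_mat q r" and M: "M \<in> carrier_mat r r"
  shows "A * (B * M * mat_adjoint B) * mat_adjoint A = (A * B) * M * mat_adjoint (A * B)"
proof -
  note d = cD[OF A] cD[OF B] cD[OF M]
  show ?thesis using d by (simp add: massoc adj_mult)
qed

lemma discord_obj_conj:
  assumes U: "unitary dA U" and V: "unitary dB V" and rho: "\<rho> \<in> carrier_mat (dA*dB) (dA*dB)"
    and H: "mat_adjoint \<rho> = \<rho>" and W: "W \<in> carrier_mat (dE*n) dA"
  shows "discord_obj \<alpha> dA dB (kron U V * \<rho> * mat_adjoint (kron U V)) n dE W = discord_obj \<alpha> dA dB \<rho> n dE (W * U)"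
proof -
  have Uc: "U \<in> carrier_mat dA dA" and Vc: "V \<in> carrier_mat dB dB" using U V by (auto simp: unitary_def)
  define K where "K = kron W (1\<^sub>m dB)"
  define K2 where "K2 = kron (W * U) (1\<^sub>m dB)"
  define Y where "Y = kron (1\<^sub>m (dE*n)) V"
  define P where "P = kron (1\<^sub>m dE) (swap_mat n dB)"
  define Q where "Q = Qm dE n V"
  have Kc: "K \<in> carrier_mat (dE*n*dB) (dA*dB)" unfolding K_def using W by auto
  have WU: "W * U \<in> carrier_mat (dE*n) dA" using W Uc by auto
  have K2c: "K2 \<in> carrier_mat (dE*n*dB) (dA*dB)" unfolding K2_def using WU by auto
  have Yc: "Y \<in> carrier_mat (dE*n*dB) (dE*n*dB)" unfolding Y_def using Vc by auto
  have UVc: "kron U V \<in> carrier_mat (dA*dB) (dA*dB)" using Uc Vc by auto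
  have Pc: "P \<in> carrier_mat (dE*n*dB) (dE*n*dB)" unfolding P_def using swap_carrier[of n dB] by (auto simp: mult.assoc)
  have Qc: "Q \<in> carrier_mat (dE*n*dB) (dE*n*dB)" unfolding Q_def using Qm_carrier[OF Vc, of dE n] by (simp add: mult_ac)
  have KUV: "K * kron U V = Y * K2"
  proof -
    have "K * kron U V = kron (W * U) (1\<^sub>m dB * V)" unfolding K_def by (rule kron_mult[OF W one_carrier_mat Uc Vc])
    also have "\<dots> = kron (1\<^sub>m (dE*n) * (W * U)) (V * 1\<^sub>m dB)" using cD[OF WU] cD[OF Vc] by simp
    also have "\<dots> = Y * K2" unfolding Y_def K2_def by (rule kron_mult[symmetric, OF one_carrier_mat Vc WU one_carrier_mat])
    finally show ?thesis .
  qed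
  have PY: "P * Y = Q * P"
  proof -
    have "Y = kron (1\<^sub>m dE) (kron (1\<^sub>m n) V)" unfolding Y_def by (simp add: kron_one[symmetric] kron_assoc)
    hence "P * Y = kron (1\<^sub>m dE * 1\<^sub>m dE) (swap_mat n dB * kron (1\<^sub>m n) V)"
      unfolding P_def using Vc swap_carrier[of n dB] by (simp add: kron_mult[of _ dE dE _ "n*dB" "n*dB" _ dE _ "n*dB"])
    also have "\<dots> = kron (1\<^sub>m dE * 1\<^sub>m dE) (kron V (1\<^sub>m n) * swap_mat n dB)" by (simp add: swap_comm[OF Vc])
    also have "\<dots> = Q * P"
    proof -
      have KVc: "kron V (1\<^sub>m n) \<in> carrier_mat (n*dB) (n*dB)" using Vc kron_carrier[OF Vc one_carrier_mat[of n]]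
        by (simp add: mult.commute)
      show ?thesis unfolding Q_def Qm_def P_def
        by (rule kron_mult[symmetric, OF one_carrier_mat KVc one_carrier_mat swap_carrier])
    qed
    finally show ?thesis .
  qed
  define X where "X = K2 * \<rho> * mat_adjoint K2"
  have Xc: "X \<in> carrier_mat (dE*n*dB) (dE*n*dB)" unfolding X_def using K2c rho by auto
  have e1: "K * (kron U V * \<rho> * mat_adjoint (kron U V)) * mat_adjoint K = Y * X * mat_adjoint Y"
    unfolding X_def conj_comp[OF Kc UVc rho] KUV conj_comp[OF Yc K2c rho] ..
  have e2: "P * (Y * X * mat_adjoint Y) * mat_adjoint P = Q * (P * X * mat_adjoint P) * mat_adjoint Q"
    unfolding conj_comp[OF Pc Yc Xc] PY conj_comp[OF Qc Pc Xc] ..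
  have w: "P * X * mat_adjoint P \<in> carrier_mat (dE*dB*n) (dE*dB*n)" using Pc Xc by (auto simp: mult_ac)
  have XH: "mat_adjoint X = X" unfolding X_def by (rule hermitian_conj[OF rho H K2c])
  have wH: "mat_adjoint (P * X * mat_adjoint P) = P * X * mat_adjoint P" by (rule hermitian_conj[OF Xc XH Pc])
  show ?thesis
    unfolding discord_obj_def Let_def K_def[symmetric] K2_def[symmetric] P_def[symmetric] X_def[symmetric] e1 e2
    unfolding Q_def by (rule cmi_inv[OF V w wH])
qed



lemma adj_inner:
  fixes U :: "complex mat"
  assumes U: "U \<in> carrier_mat n n" and v: "v \<in> carrier_vec n" and z: "z \<in> carrier_vec n"
  shows "conjugate v \<bullet> (mat_adjoint U *\<^sub>v z) = conjugate (U *\<^sub>v v) \<bullet> z"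
proof -
  have "conjugate v \<bullet> (mat_adjoint U *\<^sub>v z) = (\<Sum>i<n. cnj (v $ i) * (\<Sum>k<n. cnj (U $$ (k,i)) * z $ k))"
    using U v z by (auto simp: scalar_prod_def atLeast0LessThan intro!: sum.cong)
  also have "\<dots> = (\<Sum>i<n. \<Sum>k<n. cnj (v $ i) * cnj (U $$ (k,i)) * z $ k)"
    by (simp add: sum_distrib_left mult.assoc)
  also have "\<dots> = (\<Sum>k<n. \<Sum>i<n. cnj (v $ i) * cnj (U $$ (k,i)) * z $ k)"
    by (rule sum.swap)
  also have "\<dots> = (\<Sum>k<n. cnj (\<Sum>i<n. U $$ (k,i) * v $ i) * z $ k)"
    by (simp add: cnj_sum sum_distrib_right sum_distrib_left mult_ac)
  also have "\<dots> = conjugate (U *\<^sub>v v) \<bullet> z"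
    using U v z by (auto simp: scalar_prod_def atLeast0LessThan intro!: sum.cong)
  finally show ?thesis .
qed

lemma psd_conj:
  assumes M: "M \<in> carrier_mat n n" and P: "psd M" and U: "U \<in> carrier_mat n n"
  shows "psd (mat_adjoint U * M * U)"
proof -
  have H: "mat_adjoint M = M" using P by (simp add: psd_def hermitian_def)
  have aU: "mat_adjoint U \<in> carrier_mat n n" using U by auto
  have c: "mat_adjoint U * M * U \<in> carrier_mat n n" using U M aU by auto
  have "mat_adjoint (mat_adjoint U * M * mat_adjoint (mat_adjoint U)) = mat_adjoint U * M * mat_adjoint (mat_adjoint U)"
    by (rule hermitian_conj[OF M H aU])
  hence h: "hermitian (mat_adjoint U * M * U)" using c by (simp add: hermitian_def square_mat.simps)
  have "\<forall>v \<in> carrier_vec n. 0 \<le> Re (conjugate v \<bullet> ((mat_adjoint U * M * U) *\<^sub>v v))"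
  proof
    fix v :: "complex vec" assume v: "v \<in> carrier_vec n"
    have Uv: "U *\<^sub>v v \<in> carrier_vec n" using U v by auto
    have MUv: "M *\<^sub>v (U *\<^sub>v v) \<in> carrier_vec n" using M Uv by auto
    have "(mat_adjoint U * M * U) *\<^sub>v v = mat_adjoint U *\<^sub>v (M *\<^sub>v (U *\<^sub>v v))"
    proof -
      have aUM: "mat_adjoint U * M \<in> carrier_mat n n" using aU M by simp
      have "(mat_adjoint U * M * U) *\<^sub>v v = (mat_adjoint U * M) *\<^sub>v (U *\<^sub>v v)" by (rule assoc_mult_mat_vec[OF aUM U v])
      also have "\<dots> = mat_adjoint U *\<^sub>v (M *\<^sub>v (U *\<^sub>v v))" by (rule assoc_mult_mat_vec[OF aU M Uv])
      finally show ?thesis .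
    qed
    hence "conjugate v \<bullet> ((mat_adjoint U * M * U) *\<^sub>v v) = conjugate (U *\<^sub>v v) \<bullet> (M *\<^sub>v (U *\<^sub>v v))"
      using adj_inner[OF U v MUv] by simp
    moreover have "0 \<le> Re (conjugate (U *\<^sub>v v) \<bullet> (M *\<^sub>v (U *\<^sub>v v)))"
      using P Uv M unfolding psd_def by auto
    ultimately show "0 \<le> Re (conjugate v \<bullet> ((mat_adjoint U * M * U) *\<^sub>v v))" by simp
  qed
  then show ?thesis using h c cD[OF U] unfolding psd_def by simp
qed

lemma triple_entry:
  fixes A B C :: "complex mat"
  assumes A: "A \<in> carrier_mat p q" and B: "B \<in> carrier_mat q r" and C: "C \<in> carrier_mat r s"
    and i: "i < p" and j: "j < s"
  shows "(A * B * C) $$ (i,j) = (\<Sum>k<q. \<Sum>l<r. A $$ (i,k) * B $$ (k,l) * C $$ (l,j))"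
proof -
  have "(A * B * C) $$ (i,j) = (\<Sum>l<r. (A * B) $$ (i,l) * C $$ (l,j))"
    using A B C i j by (subst mult_entry) (auto simp del: mult_entry)
  also have "\<dots> = (\<Sum>l<r. (\<Sum>k<q. A $$ (i,k) * B $$ (k,l)) * C $$ (l,j))"
    using A B i by (intro sum.cong refl) auto
  also have "\<dots> = (\<Sum>l<r. \<Sum>k<q. A $$ (i,k) * B $$ (k,l) * C $$ (l,j))"
    by (simp add: sum_distrib_right)
  also have "\<dots> = (\<Sum>k<q. \<Sum>l<r. A $$ (i,k) * B $$ (k,l) * C $$ (l,j))"
    by (rule sum.swap)
  finally show ?thesis .
qed

lemma rot3: "(\<Sum>x\<in>A. \<Sum>y\<in>B. \<Sum>z\<in>C. f x y z) = (\<Sum>y\<in>B. \<Sum>z\<in>C. \<Sum>x\<in>A. f x y z)"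
proof -
  have "(\<Sum>x\<in>A. \<Sum>y\<in>B. \<Sum>z\<in>C. f x y z) = (\<Sum>y\<in>B. \<Sum>x\<in>A. \<Sum>z\<in>C. f x y z)" by (rule sum.swap)
  also have "\<dots> = (\<Sum>y\<in>B. \<Sum>z\<in>C. \<Sum>x\<in>A. f x y z)" by (rule sum.cong[OF refl], rule sum.swap)
  finally show ?thesis .
qed

definition Lconj :: "complex mat \<Rightarrow> nat \<Rightarrow> (nat \<Rightarrow> complex mat) \<Rightarrow> nat \<Rightarrow> complex mat" where
  "Lconj U n \<Lambda> = (\<lambda>x. if x < n then mat_adjoint U * \<Lambda> x * U else \<Lambda> x)"

lemma povm_conj:
  assumes U: "unitary d U" and P: "povm d n \<Lambda>"
  shows "povm d n (Lconj U n \<Lambda>)"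
proof -
  have Uc: "U \<in> carrier_mat d d" and Uu: "mat_adjoint U * U = 1\<^sub>m d" using U by (auto simp: unitary_def)
  have aU: "mat_adjoint U \<in> carrier_mat d d" using Uc by auto
  have Lc: "\<And>x. x < n \<Longrightarrow> \<Lambda> x \<in> carrier_mat d d" and Lp: "\<And>x. x < n \<Longrightarrow> psd (\<Lambda> x)"
    and S: "mat d d (\<lambda>(i, j). \<Sum>x<n. \<Lambda> x $$ (i, j)) = 1\<^sub>m d" using P by (auto simp: povm_def)
  have S1: "\<And>k l. k < d \<Longrightarrow> l < d \<Longrightarrow> (\<Sum>x<n. \<Lambda> x $$ (k,l)) = 1\<^sub>m d $$ (k,l)"
  proof -
    fix k l assume "k < d" "l < d"
    then show "(\<Sum>x<n. \<Lambda> x $$ (k,l)) = 1\<^sub>m d $$ (k,l)"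
      using arg_cong[OF S, of "\<lambda>M. M $$ (k,l)"] by simp
  qed
  have "\<forall>x<n. Lconj U n \<Lambda> x \<in> carrier_mat d d \<and> psd (Lconj U n \<Lambda> x)"
  proof (intro allI impI conjI)
    fix x assume x: "x < n"
    have e: "Lconj U n \<Lambda> x = mat_adjoint U * \<Lambda> x * U" using x by (simp add: Lconj_def)
    show "Lconj U n \<Lambda> x \<in> carrier_mat d d" unfolding e using aU Lc[OF x] Uc by (metis mult_carrier_mat)
    show "psd (Lconj U n \<Lambda> x)" unfolding e by (rule psd_conj[OF Lc[OF x] Lp[OF x] Uc])
  qed
  moreover have "mat d d (\<lambda>(i, j). \<Sum>x<n. Lconj U n \<Lambda> x $$ (i, j)) = 1\<^sub>m d"
  proof (rule eq_matI)
    fix i j assume "i < dim_row (1\<^sub>m d)" "j < dim_col (1\<^sub>m d)"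
    hence i: "i < d" and j: "j < d" by auto
    have "(\<Sum>x<n. Lconj U n \<Lambda> x $$ (i, j)) = (\<Sum>x<n. \<Sum>k<d. \<Sum>l<d. mat_adjoint U $$ (i,k) * \<Lambda> x $$ (k,l) * U $$ (l,j))"
      using triple_entry[OF aU Lc Uc i j] by (intro sum.cong refl) (auto simp: Lconj_def)
    also have "\<dots> = (\<Sum>k<d. \<Sum>l<d. \<Sum>x<n. mat_adjoint U $$ (i,k) * \<Lambda> x $$ (k,l) * U $$ (l,j))"
      by (rule rot3)
    also have "\<dots> = (\<Sum>k<d. \<Sum>l<d. mat_adjoint U $$ (i,k) * 1\<^sub>m d $$ (k,l) * U $$ (l,j))"
    proof (intro sum.cong refl)
      fix k l assume "k \<in> {..<d}" "l \<in> {..<d}"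
      hence "(\<Sum>x<n. \<Lambda> x $$ (k,l)) = 1\<^sub>m d $$ (k,l)" using S1 by simp
      moreover have "(\<Sum>x<n. mat_adjoint U $$ (i,k) * \<Lambda> x $$ (k,l) * U $$ (l,j)) = mat_adjoint U $$ (i,k) * (\<Sum>x<n. \<Lambda> x $$ (k,l)) * U $$ (l,j)"
        by (simp add: sum_distrib_left sum_distrib_right)
      ultimately show "(\<Sum>x<n. mat_adjoint U $$ (i,k) * \<Lambda> x $$ (k,l) * U $$ (l,j)) = mat_adjoint U $$ (i,k) * 1\<^sub>m d $$ (k,l) * U $$ (l,j)"
        by simp
    qed
    also have "\<dots> = (mat_adjoint U * 1\<^sub>m d * U) $$ (i,j)"
      using triple_entry[OF aU one_carrier_mat Uc i j] by simp
    also have "\<dots> = 1\<^sub>m d $$ (i,j)" by (simp add: right_mult_one_mat[OF aU] Uu)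
    finally show "mat d d (\<lambda>(i, j). \<Sum>x<n. Lconj U n \<Lambda> x $$ (i, j)) $$ (i,j) = 1\<^sub>m d $$ (i,j)" using i j by simp
  qed auto
  ultimately show ?thesis unfolding povm_def by blast
qed


lemma meas_conj:
  assumes U: "unitary d U" and Lc: "\<And>x. x < n \<Longrightarrow> \<Lambda> x \<in> carrier_mat d d" and s: "\<sigma> \<in> carrier_mat d d"
  shows "meas_channel n \<Lambda> (U * \<sigma> * mat_adjoint U) = meas_channel n (Lconj U n \<Lambda>) \<sigma>"
proof (rule eq_matI)
  have Uc: "U \<in> carrier_mat d d" using U by (auto simp: unitary_def)
  have aU: "mat_adjoint U \<in> carrier_mat d d" using Uc by auto
  fix i j assume "i < dim_row (meas_channel n (Lconj U n \<Lambda>) \<sigma>)" "j < dim_col (meas_channel n (Lconj U n \<Lambda>) \<sigma>)"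
  hence i: "i < n" and j: "j < n" by (auto simp: meas_channel_def)
  have LUs: "\<Lambda> i * U * \<sigma> \<in> carrier_mat d d" using Lc[OF i] Uc s by (metis mult_carrier_mat)
  note dd = cD[OF Uc] cD[OF aU] cD[OF s] cD[OF Lc[OF i]]
  have "mtrace (\<Lambda> i * (U * \<sigma> * mat_adjoint U)) = mtrace (\<Lambda> i * U * \<sigma> * mat_adjoint U)"
    using dd by (simp add: massoc)
  also have "\<dots> = mtrace (mat_adjoint U * (\<Lambda> i * U * \<sigma>))" by (rule mtrace_comm[OF LUs aU])
  also have "\<dots> = mtrace (mat_adjoint U * \<Lambda> i * U * \<sigma>)" using dd by (simp add: massoc)
  finally have tr: "mtrace (\<Lambda> i * (U * \<sigma> * mat_adjoint U)) = mtrace (Lconj U n \<Lambda> i * \<sigma>)"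
    using i by (simp add: Lconj_def)
  show "meas_channel n \<Lambda> (U * \<sigma> * mat_adjoint U) $$ (i,j) = meas_channel n (Lconj U n \<Lambda>) \<sigma> $$ (i,j)"
  proof (cases "i = j")
    case True then show ?thesis using tr i by (simp add: meas_channel_def)
  next
    case False then show ?thesis using i j by (simp add: meas_channel_def)
  qed
qed (auto simp: meas_channel_def)

lemma iso_conj:
  assumes U: "unitary d U" and P: "povm d n \<Lambda>" and I: "iso_ext d n \<Lambda> dE W"
  shows "iso_ext d n (Lconj U n \<Lambda>) dE (W * U)"
proof -
  have Uc: "U \<in> carrier_mat d d" and Uu: "mat_adjoint U * U = 1\<^sub>m d" using U by (auto simp: unitary_def)
  have aU: "mat_adjoint U \<in> carrier_mat d d" using Uc by auto
  have Wc: "W \<in> carrier_mat (dE*n) d" and Wu: "mat_adjoint W * W = 1\<^sub>m d"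
    and Wm: "\<And>\<sigma>. \<sigma> \<in> carrier_mat d d \<Longrightarrow> ptrace_left dE n (W * \<sigma> * mat_adjoint W) = meas_channel n \<Lambda> \<sigma>"
    using I by (auto simp: iso_ext_def)
  have Lc: "\<And>x. x < n \<Longrightarrow> \<Lambda> x \<in> carrier_mat d d" using P by (auto simp: povm_def)
  have WUc: "W * U \<in> carrier_mat (dE*n) d" using Wc Uc by simp
  have aW: "mat_adjoint W \<in> carrier_mat d (dE*n)" using Wc by auto
  note dd = cD[OF Uc] cD[OF aU] cD[OF Wc] cD[OF aW]
  have "mat_adjoint (W * U) * (W * U) = mat_adjoint U * (mat_adjoint W * W) * U"
    using dd by (simp add: adj_mult massoc)
  also have "\<dots> = 1\<^sub>m d" unfolding Wu using Uu dd by simp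
  finally have u: "mat_adjoint (W * U) * (W * U) = 1\<^sub>m d" .
  have "\<forall>\<sigma> \<in> carrier_mat d d. ptrace_left dE n ((W * U) * (\<sigma>::complex mat) * mat_adjoint (W * U)) = meas_channel n (Lconj U n \<Lambda>) \<sigma>"
  proof
    fix \<sigma> :: "complex mat" assume s: "\<sigma> \<in> carrier_mat d d"
    have Us: "U * \<sigma> * mat_adjoint U \<in> carrier_mat d d" using Uc s aU by (metis mult_carrier_mat)
    have "(W * U) * \<sigma> * mat_adjoint (W * U) = W * (U * \<sigma> * mat_adjoint U) * mat_adjoint W"
      by (rule conj_comp[OF Wc Uc s, symmetric])
    then show "ptrace_left dE n ((W * U) * \<sigma> * mat_adjoint (W * U)) = meas_channel n (Lconj U n \<Lambda>) \<sigma>"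
      using Wm[OF Us] meas_conj[OF U Lc s] by simp
  qed
  then show ?thesis using WUc u unfolding iso_ext_def by blast
qed

lemma Lconj_inv:
  assumes U: "unitary d U" and P: "povm d n \<Lambda>"
  shows "Lconj U n (Lconj (mat_adjoint U) n \<Lambda>) = \<Lambda>"
proof
  fix x
  have Uc: "U \<in> carrier_mat d d" using U by (auto simp: unitary_def)
  show "Lconj U n (Lconj (mat_adjoint U) n \<Lambda>) x = \<Lambda> x"
  proof (cases "x < n")
    case True
    have Lc: "\<Lambda> x \<in> carrier_mat d d" using P True by (auto simp: povm_def)
    have "mat_adjoint U * (U * \<Lambda> x * mat_adjoint U) * U = \<Lambda> x"
      using cD[OF Uc] cD[OF Lc] by (simp add: massoc ucancel[OF U] U[unfolded unitary_def])
    then show ?thesis using True by (simp add: Lconj_def)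
  qed (simp add: Lconj_def)
qed

lemma inf_eq:
  assumes "\<And>q. q \<in> S \<Longrightarrow> \<exists>q'\<in>S. F q = G q'" and "\<And>q. q \<in> S \<Longrightarrow> \<exists>q'\<in>S. G q = F q'"
  shows "(INF q\<in>S. F q) = (INF q\<in>S. (G q :: ereal))"
proof -
  have "F ` S = G ` S"
  proof
    show "F ` S \<subseteq> G ` S" using assms(1) by blast
    show "G ` S \<subseteq> F ` S" using assms(2) by blast
  qed
  then show ?thesis by simp
qed

theorem proposition9:
  fixes \<alpha> :: real and dA dB :: nat and \<rho> U V :: "complex mat"
  assumes "0 < \<alpha>" and "\<alpha> \<noteq> 1"
    and "0 < dA" and "0 < dB"
    and "density (dA * dB) \<rho>"
    and "unitary dA U" and "unitary dB V"
  shows "renyi_discord \<alpha> dA dB (kron U V * \<rho> * mat_adjoint (kron U V))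
         = renyi_discord \<alpha> dA dB \<rho>"
proof -
  have U: "unitary dA U" and V: "unitary dB V" using assms by auto
  have rho: "\<rho> \<in> carrier_mat (dA*dB) (dA*dB)" and H: "mat_adjoint \<rho> = \<rho>"
    using assms(5) by (auto simp: density_def psd_def hermitian_def)
  have Uc: "U \<in> carrier_mat dA dA" using U by (auto simp: unitary_def)
  have aUu: "unitary dA (mat_adjoint U)" using U by (rule unitary_adj)
  show ?thesis unfolding renyi_discord_def
  proof (rule inf_eq)
    fix q assume q: "q \<in> {(n, \<Lambda>, dE, V). povm dA n \<Lambda> \<and> iso_ext dA n \<Lambda> dE V}"
    then obtain n \<Lambda> dE W where qe: "q = (n, \<Lambda>, dE, W)" and P: "povm dA n \<Lambda>" and I: "iso_ext dA n \<Lambda> dE W" by auto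
    have Wc: "W \<in> carrier_mat (dE*n) dA" using I by (auto simp: iso_ext_def)
    let ?q' = "(n, Lconj U n \<Lambda>, dE, W * U)"
    have mem: "?q' \<in> {(n, \<Lambda>, dE, V). povm dA n \<Lambda> \<and> iso_ext dA n \<Lambda> dE V}"
      using povm_conj[OF U P] iso_conj[OF U P I] by simp
    have eq: "discord_obj \<alpha> dA dB (kron U V * \<rho> * mat_adjoint (kron U V)) n dE W = discord_obj \<alpha> dA dB \<rho> n dE (W * U)"
      by (rule discord_obj_conj[OF U V rho H Wc])
    show "\<exists>q'\<in>{(n, \<Lambda>, dE, V). povm dA n \<Lambda> \<and> iso_ext dA n \<Lambda> dE V}.
        ereal (case q of (n', L', e', X') \<Rightarrow> discord_obj \<alpha> dA dB (kron U V * \<rho> * mat_adjoint (kron U V)) n' e' X') =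
        ereal (case q' of (n', L', e', X') \<Rightarrow> discord_obj \<alpha> dA dB \<rho> n' e' X')"
      by (rule bexI[OF _ mem]) (simp add: qe eq)
  next
    fix q assume q: "q \<in> {(n, \<Lambda>, dE, V). povm dA n \<Lambda> \<and> iso_ext dA n \<Lambda> dE V}"
    then obtain n \<Lambda> dE W where qe: "q = (n, \<Lambda>, dE, W)" and P: "povm dA n \<Lambda>" and I: "iso_ext dA n \<Lambda> dE W" by auto
    have Wc: "W \<in> carrier_mat (dE*n) dA" using I by (auto simp: iso_ext_def)
    have aU: "mat_adjoint U \<in> carrier_mat dA dA" using Uc by auto
    have WaUc: "W * mat_adjoint U \<in> carrier_mat (dE*n) dA" using Wc aU by simp
    let ?q' = "(n, Lconj (mat_adjoint U) n \<Lambda>, dE, W * mat_adjoint U)"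
    have mem: "?q' \<in> {(n, \<Lambda>, dE, V). povm dA n \<Lambda> \<and> iso_ext dA n \<Lambda> dE V}"
      using povm_conj[OF aUu P] iso_conj[OF aUu P I] by simp
    have eq1: "discord_obj \<alpha> dA dB (kron U V * \<rho> * mat_adjoint (kron U V)) n dE (W * mat_adjoint U) = discord_obj \<alpha> dA dB \<rho> n dE (W * mat_adjoint U * U)"
      by (rule discord_obj_conj[OF U V rho H WaUc])
    have eq2: "W * mat_adjoint U * U = W"
      using cD[OF Wc] cD[OF Uc] U by (simp add: massoc unitary_def)
    show "\<exists>q'\<in>{(n, \<Lambda>, dE, V). povm dA n \<Lambda> \<and> iso_ext dA n \<Lambda> dE V}.
        ereal (case q of (n', L', e', X') \<Rightarrow> discord_obj \<alpha> dA dB \<rho> n' e' X') =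
        ereal (case q' of (n', L', e', X') \<Rightarrow> discord_obj \<alpha> dA dB (kron U V * \<rho> * mat_adjoint (kron U V)) n' e' X')"
      by (rule bexI[OF _ mem]) (simp add: qe eq1 eq2)
  qed
qed


end
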